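(* Let $r\ge3$, $n>r$. For $1\le i<r$ let $\tau'(T_{s_i}):V_\omega\to V_\omega$ be the action of $vF_iE_i-1$, let $\tau'(T_{\rho^{-1}})$ be the action of $(F_nF_{n-1}\cdots F_{r+1})(F_1F_2\cdots F_r)$, and let $\tau'(T_\rho)$ be the action of $(E_rE_{r+1}\cdots E_{n-1})(E_{r-1}E_{r-2}\cdots E_1)E_n$, all restricted to $V_\omega$. Then $\tau'(T_\rho)$ and $\tau'(T_{\rho^{-1}})$ are mutually inverse, and, writing $q=v^2$: (1') $\tau'(T_{s_i})^2=(q-1)\tau'(T_{s_i})+q$ for $1\le i\le r-1$; (2') $\tau'(T_{s_i})\tau'(T_{s_j})=\tau'(T_{s_j})\tau'(T_{s_i})$ if $|i-j|>1$; (3') $\tau'(T_{s_i})\tau'(T_{s_j})\tau'(T_{s_i})=\tau'(T_{s_j})\tau'(T_{s_i})\tau'(T_{s_j})$ if $|i-j|=1$; (4') $\tau'(T_\rho)\tau'(T_{s_{i+1}})\tau'(T_\rho)^{-1}=\tau'(T_{s_i})$ for $1\le i<r-1$; (5') $\tau'(T_\rho)^r\tau'(T_{s_i})\tau'(T_\rho)^{-r}=\tau'(T_{s_i})$ for $1\le i\le r-1$.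
   Context: $V$ is the $\mathbb{Q}(v)$-space with basis $e_t$ ($t\in\mathbb{Z}$), with $E_ie_{t+1}=e_t$ if $i\equiv t\pmod n$ (else $0$), $F_ie_t=e_{t+1}$ if $i\equiv t\pmod n$ (else $0$), $K_ie_t=ve_t$ if $i\equiv t \pmod n$ (else $e_t$), $1\le i\le n$; these act on $V^{\otimes r}$ via iterated $\Delta(E_i)=E_i\otimes K_iK_{i+1}^{-1}+1\otimes E_i$, $\Delta(F_i)=K_i^{-1}K_{i+1}\otimes F_i+F_i\otimes1$, $\Delta(K_i^{\pm1})=K_i^{\pm1}\otimes K_i^{\pm1}$ (indices mod $n$). A basis tensor $e_{t_1}\otimes\cdots\otimes e_{t_r}$ has weight $\lambda$ with $\lambda_i=|\{j:t_j\equiv i\pmod n\}|$; $V_\omega$ is the span of basis tensors of weight $\omega=(1^r,0^{n-r})$. *)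

theory Defs
  imports "HOL-Computational_Algebra.Polynomial" "HOL-Computational_Algebra.Fraction_Field"
          "HOL-Number_Theory.Cong"
begin

type_synonym qv = "rat poly fract"

definition vv :: qv where "vv = Fract [:0, 1:] 1"

text \<open>Vectors of V (basis e_t, t in Z) are functions int => qv (finitely supported);
  vectors of tensor powers of V are functions on basis tensors, i.e. int lists.\<close>
type_synonym tvec = "int list \<Rightarrow> qv"

definition bas1 :: "int \<Rightarrow> int \<Rightarrow> qv" where
  "bas1 t = (\<lambda>s. if s = t then 1 else 0)"

definition bas :: "int list \<Rightarrow> tvec" where
  "bas ts = (\<lambda>u. if u = ts then 1 else 0)"

definition tens :: "(int \<Rightarrow> qv) \<Rightarrow> tvec \<Rightarrow> tvec" where
  "tens a b = (\<lambda>u. case u of [] \<Rightarrow> 0 | s # us \<Rightarrow> a s * b us)"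

definition E1 :: "nat \<Rightarrow> int \<Rightarrow> int \<Rightarrow> int \<Rightarrow> qv" where
  "E1 n i t = (\<lambda>s. if [i = t - 1] (mod int n) \<and> s = t - 1 then 1 else 0)"

definition F1 :: "nat \<Rightarrow> int \<Rightarrow> int \<Rightarrow> int \<Rightarrow> qv" where
  "F1 n i t = (\<lambda>s. if [i = t] (mod int n) \<and> s = t + 1 then 1 else 0)"

definition K1 :: "nat \<Rightarrow> int \<Rightarrow> int \<Rightarrow> qv" where
  "K1 n i t = (if [i = t] (mod int n) then vv else 1)"

definition K1inv :: "nat \<Rightarrow> int \<Rightarrow> int \<Rightarrow> qv" where
  "K1inv n i t = (if [i = t] (mod int n) then inverse vv else 1)"

text \<open>Delta(K^(+-1)) = K^(+-1) (x) K^(+-1): diagonal action on basis tensors.\<close>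
fun Kt :: "nat \<Rightarrow> int \<Rightarrow> int list \<Rightarrow> qv" where
  "Kt n i [] = 1"
| "Kt n i (t # ts) = K1 n i t * Kt n i ts"

fun Ktinv :: "nat \<Rightarrow> int \<Rightarrow> int list \<Rightarrow> qv" where
  "Ktinv n i [] = 1"
| "Ktinv n i (t # ts) = K1inv n i t * Ktinv n i ts"

text \<open>Iterated coproduct, Delta^(k+1) = (1 (x) Delta^(k)) o Delta, applied to basis tensors:
  Delta(E_i) = E_i (x) K_i K_(i+1)^(-1) + 1 (x) E_i,
  Delta(F_i) = K_i^(-1) K_(i+1) (x) F_i + F_i (x) 1.\<close>
fun Et :: "nat \<Rightarrow> int \<Rightarrow> int list \<Rightarrow> tvec" where
  "Et n i [] = (\<lambda>_. 0)"
| "Et n i (t # ts) = (\<lambda>u.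
      tens (E1 n i t) (\<lambda>w. (Kt n i ts * Ktinv n (i + 1) ts) * bas ts w) u
    + tens (bas1 t) (Et n i ts) u)"

fun Ft :: "nat \<Rightarrow> int \<Rightarrow> int list \<Rightarrow> tvec" where
  "Ft n i [] = (\<lambda>_. 0)"
| "Ft n i (t # ts) = (\<lambda>u.
      tens (\<lambda>s. (K1inv n i t * K1 n (i + 1) t) * bas1 t s) (Ft n i ts) u
    + tens (F1 n i t) (bas ts) u)"

definition lin :: "(int list \<Rightarrow> tvec) \<Rightarrow> tvec \<Rightarrow> tvec" where
  "lin X f = (\<lambda>u. \<Sum>w\<in>{w. f w \<noteq> 0}. f w * X w u)"

datatype gen = GE int | GF int

fun gen_op :: "nat \<Rightarrow> gen \<Rightarrow> tvec \<Rightarrow> tvec" where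
  "gen_op n (GE i) = lin (Et n i)"
| "gen_op n (GF i) = lin (Ft n i)"

text \<open>Action of a word g_1 g_2 ... g_k (g_k acts first).\<close>
definition word_op :: "nat \<Rightarrow> gen list \<Rightarrow> tvec \<Rightarrow> tvec" where
  "word_op n gs = foldr (\<lambda>g acc. gen_op n g \<circ> acc) gs id"

definition Ts :: "nat \<Rightarrow> nat \<Rightarrow> tvec \<Rightarrow> tvec" where
  "Ts n i f = (\<lambda>u. vv * word_op n [GF (int i), GE (int i)] f u - f u)"

definition Trhoinv :: "nat \<Rightarrow> nat \<Rightarrow> tvec \<Rightarrow> tvec" where
  "Trhoinv n r = word_op n (map (\<lambda>k. GF (int k)) (rev [r+1..<n+1]) @ map (\<lambda>k. GF (int k)) [1..<r+1])"

definition Trho :: "nat \<Rightarrow> nat \<Rightarrow> tvec \<Rightarrow> tvec" where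
  "Trho n r = word_op n (map (\<lambda>k. GE (int k)) [r..<n] @ map (\<lambda>k. GE (int k)) (rev [1..<r]) @ [GE (int n)])"

definition wt :: "nat \<Rightarrow> int list \<Rightarrow> nat \<Rightarrow> nat" where
  "wt n w i = card {j. j < length w \<and> [w ! j = int i] (mod int n)}"

definition Vomega :: "nat \<Rightarrow> nat \<Rightarrow> tvec \<Rightarrow> bool" where
  "Vomega n r f \<longleftrightarrow> finite {w. f w \<noteq> 0} \<and>
     (\<forall>w. f w \<noteq> 0 \<longrightarrow> length w = r \<and> (\<forall>i\<in>{1..n}. wt n w i = (if i \<le> r then 1 else 0)))"

end

theory Submission
  imports Defs
begin


definition rs :: "nat \<Rightarrow> int \<Rightarrow> int" where
  "rs n t = (t - 1) mod int n + 1"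

lemma rs_eq_iff: "rs n a = rs n b \<longleftrightarrow> [a = b] (mod int n)"
  unfolding rs_def cong_def
  by (metis add_right_cancel mod_diff_cong mod_add_cong diff_add_cancel)

lemma cong_rs: "[a = b] (mod int n) \<longleftrightarrow> rs n a = rs n b"
  using rs_eq_iff by simp

lemma rs_range: "n > 0 \<Longrightarrow> 1 \<le> rs n t \<and> rs n t \<le> int n"
proof -
  assume "n > 0"
  then have "0 \<le> (t - 1) mod int n" "(t - 1) mod int n < int n" by auto
  then show ?thesis unfolding rs_def by auto
qed

lemma rs_id: "1 \<le> t \<Longrightarrow> t \<le> int n \<Longrightarrow> rs n t = t"
  unfolding rs_def by simp

lemma rs_plus: "rs n (t + c) = rs n (rs n t + c)"
  unfolding rs_def by (simp add: mod_simps algebra_simps)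

lemma rs_addn: "rs n (t + int n) = rs n t"
proof -
  have "(t + int n - 1) mod int n = (t - 1 + int n) mod int n" by (simp add: algebra_simps)
  also have "\<dots> = (t - 1) mod int n" by simp
  finally show ?thesis unfolding rs_def by simp
qed

lemma rs_subn: "rs n (t - int n) = rs n t"
  using rs_addn[of n "t - int n"] by simp

lemma rs_n1: "rs n (int n + 1) = 1"
  unfolding rs_def by simp

lemma rs_0: "n > 0 \<Longrightarrow> rs n 0 = int n"
proof -
  assume "n > 0"
  have "(-1) mod int n = (int n - 1) mod int n"
    by (metis add.commute mod_add_self2 uminus_add_conv_diff)
  also have "\<dots> = int n - 1" using \<open>n > 0\<close> by (intro mod_pos_pos_trivial) auto
  finally show ?thesis unfolding rs_def by simp
qed

lemma rs_plus1: "n > 0 \<Longrightarrow> rs n (t + 1) = (if rs n t = int n then 1 else rs n t + 1)"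
proof -
  assume n: "n > 0"
  have e: "rs n (t+1) = rs n (rs n t + 1)" by (rule rs_plus)
  have "1 \<le> rs n t" "rs n t \<le> int n" using rs_range[OF n] by auto
  then show ?thesis
    using e rs_n1[of n] rs_id[of "rs n t + 1" n] by auto
qed

lemma rs_minus1: "n > 0 \<Longrightarrow> rs n (t - 1) = (if rs n t = 1 then int n else rs n t - 1)"
proof -
  assume n: "n > 0"
  have e: "rs n (t + (-1)) = rs n (rs n t + (-1))" by (rule rs_plus)
  have "1 \<le> rs n t" "rs n t \<le> int n" using rs_range[OF n] by auto
  then show ?thesis
    using e rs_0[OF n] rs_id[of "rs n t - 1" n] by auto
qed

lemma rs_plusc: "n > 0 \<Longrightarrow> rs n t = a \<Longrightarrow> rs n (t + c) = rs n (a + c)"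
  using rs_plus by metis


definition supp :: "tvec \<Rightarrow> int list set" where "supp f = {w. f w \<noteq> 0}"
definition fs :: "tvec \<Rightarrow> bool" where "fs f \<longleftrightarrow> finite (supp f)"

lemma lin_alt: "supp f \<subseteq> A \<Longrightarrow> finite A \<Longrightarrow> lin X f u = (\<Sum>w\<in>A. f w * X w u)"
  unfolding lin_def supp_def
  by (rule sum.mono_neutral_left) auto

lemma supp_bas: "supp (bas w) = {w}"
  unfolding supp_def bas_def by auto

lemma fs_bas[simp]: "fs (bas w)"
  unfolding fs_def supp_bas by simp

lemma lin_bas[simp]: "lin X (bas w) = X w"
proof (rule ext)
  fix u
  have "supp (bas w) \<subseteq> {w}" by (simp add: supp_bas)
  then have "lin X (bas w) u = (\<Sum>w'\<in>{w}. bas w w' * X w' u)" by (rule lin_alt) simp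
  then show "lin X (bas w) u = X w u" by (simp add: bas_def)
qed

lemma supp_comb: "supp (\<lambda>u. a * f u + b * g u) \<subseteq> supp f \<union> supp g"
  unfolding supp_def by auto

lemma fs_comb[simp]: "fs f \<Longrightarrow> fs g \<Longrightarrow> fs (\<lambda>u. a * f u + b * g u)"
  unfolding fs_def using supp_comb finite_subset by (metis finite_Un)

lemma fs_zero[simp]: "fs (\<lambda>u. 0)"
  unfolding fs_def supp_def by simp

lemma lin_comb: "fs f \<Longrightarrow> fs g \<Longrightarrow>
   lin X (\<lambda>u. a * f u + b * g u) = (\<lambda>u. a * lin X f u + b * lin X g u)"
proof (rule ext)
  fix u assume f: "fs f" and g: "fs g"
  let ?A = "supp f \<union> supp g"
  have A: "finite ?A" using f g unfolding fs_def by simp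
  have "lin X (\<lambda>u. a * f u + b * g u) u = (\<Sum>w\<in>?A. (a * f w + b * g w) * X w u)"
    by (rule lin_alt[OF supp_comb A])
  also have "\<dots> = a * (\<Sum>w\<in>?A. f w * X w u) + b * (\<Sum>w\<in>?A. g w * X w u)"
    by (simp add: sum.distrib sum_distrib_left algebra_simps)
  also have "\<dots> = a * lin X f u + b * lin X g u"
    using lin_alt[of f ?A X u] lin_alt[of g ?A X u] A by auto
  finally show "lin X (\<lambda>u. a * f u + b * g u) u = a * lin X f u + b * lin X g u" .
qed

lemma fs_lin: "fs f \<Longrightarrow> (\<And>w. fs (X w)) \<Longrightarrow> fs (lin X f)"
proof -
  assume f: "fs f" and X: "\<And>w. fs (X w)"
  have "supp (lin X f) \<subseteq> (\<Union>w\<in>supp f. supp (X w))"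
  proof
    fix u assume "u \<in> supp (lin X f)"
    then have "(\<Sum>w\<in>{w. f w \<noteq> 0}. f w * X w u) \<noteq> 0" unfolding supp_def lin_def by simp
    then obtain w where "w \<in> {w. f w \<noteq> 0}" "f w * X w u \<noteq> 0" by (meson sum.neutral)
    then show "u \<in> (\<Union>w\<in>supp f. supp (X w))" unfolding supp_def by auto
  qed
  moreover have "finite (\<Union>w\<in>supp f. supp (X w))" using f X unfolding fs_def by auto
  ultimately show ?thesis unfolding fs_def using finite_subset by blast
qed

definition lo :: "(tvec \<Rightarrow> tvec) \<Rightarrow> bool" where
  "lo P \<longleftrightarrow> (\<forall>f. fs f \<longrightarrow> fs (P f)) \<and>
     (\<forall>f g a b. fs f \<longrightarrow> fs g \<longrightarrow> P (\<lambda>u. a * f u + b * g u) = (\<lambda>u. a * P f u + b * P g u))"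

lemma lo_fs: "lo P \<Longrightarrow> fs f \<Longrightarrow> fs (P f)" unfolding lo_def by blast
lemma lo_comb: "lo P \<Longrightarrow> fs f \<Longrightarrow> fs g \<Longrightarrow> P (\<lambda>u. a * f u + b * g u) = (\<lambda>u. a * P f u + b * P g u)"
  unfolding lo_def by blast

lemma lo_lin: "(\<And>w. fs (X w)) \<Longrightarrow> lo (lin X)"
  unfolding lo_def using fs_lin lin_comb by blast

lemma lo_id: "lo (\<lambda>f. f)" unfolding lo_def by simp

lemma lo_comp: "lo P \<Longrightarrow> lo Q \<Longrightarrow> lo (\<lambda>f. P (Q f))"
  unfolding lo_def by simp

lemma lo_comp': "lo P \<Longrightarrow> lo Q \<Longrightarrow> lo (P \<circ> Q)"
  unfolding lo_def by simp

lemma lo_lc: "lo P \<Longrightarrow> lo Q \<Longrightarrow> lo (\<lambda>f u. a * P f u + b * Q f u)"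
  unfolding lo_def by (auto simp: algebra_simps fun_eq_iff)

lemma lo_zero: "lo P \<Longrightarrow> P (\<lambda>u. 0) = (\<lambda>u. 0)"
  using lo_comb[of P "\<lambda>u. 0" "\<lambda>u. 0" 0 0] by simp

lemma lo_scale: "lo P \<Longrightarrow> fs f \<Longrightarrow> P (\<lambda>u. a * f u) = (\<lambda>u. a * P f u)"
  using lo_comb[of P f "\<lambda>u. 0" a 0] lo_zero[of P] by simp

lemma sum_bas: assumes "finite S" shows "(\<Sum>w\<in>S. c w * bas w u) = (if u \<in> S then c u else 0)"
proof -
  have "(\<Sum>w\<in>S. c w * bas w u) = (\<Sum>w\<in>S. if w = u then c w else 0)"
    by (rule sum.cong) (auto simp: bas_def)
  also have "\<dots> = (if u \<in> S then c u else 0)"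
    using \<open>finite S\<close> by (simp add: sum.delta)
  finally show ?thesis .
qed

lemma fs_sum: "finite S \<Longrightarrow> fs (\<lambda>u. \<Sum>w\<in>S. c w * bas w u)"
proof -
  assume S: "finite S"
  have "supp (\<lambda>u. \<Sum>w\<in>S. c w * bas w u) \<subseteq> S"
    unfolding supp_def sum_bas[OF S] by auto
  then show ?thesis unfolding fs_def using S finite_subset by blast
qed

lemma lo_sum: assumes hP: "lo P" shows "finite S \<Longrightarrow>
   P (\<lambda>u. \<Sum>w\<in>S. c w * bas w u) = (\<lambda>u. \<Sum>w\<in>S. c w * P (bas w) u)"
proof (induction S rule: finite_induct)
  case empty
  then show ?case using lo_zero[OF hP] by simp
next
  case (insert x F)
  have "P (\<lambda>u. \<Sum>w\<in>insert x F. c w * bas w u) = P (\<lambda>u. c x * bas x u + 1 * (\<Sum>w\<in>F. c w * bas w u))"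
    using insert by simp
  also have "\<dots> = (\<lambda>u. c x * P (bas x) u + 1 * P (\<lambda>u. \<Sum>w\<in>F. c w * bas w u) u)"
    by (rule lo_comb[OF hP]) (simp_all add: fs_sum insert)
  also have "\<dots> = (\<lambda>u. \<Sum>w\<in>insert x F. c w * P (bas w) u)"
    using insert by simp
  finally show ?case .
qed

lemma f_expand: "fs f \<Longrightarrow> f = (\<lambda>u. \<Sum>w\<in>supp f. f w * bas w u)"
  by (auto simp: fun_eq_iff sum_bas supp_def fs_def)

lemma lo_ext: "lo P \<Longrightarrow> lo Q \<Longrightarrow> fs f \<Longrightarrow> (\<And>w. w \<in> supp f \<Longrightarrow> P (bas w) = Q (bas w)) \<Longrightarrow> P f = Q f"
proof -
  assume P: "lo P" and Q: "lo Q" and f: "fs f" and e: "\<And>w. w \<in> supp f \<Longrightarrow> P (bas w) = Q (bas w)"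
  have fin: "finite (supp f)" using f unfolding fs_def .
  have "P f = (\<lambda>u. \<Sum>w\<in>supp f. f w * P (bas w) u)"
    by (subst f_expand[OF f]) (rule lo_sum[OF P fin])
  also have "\<dots> = (\<lambda>u. \<Sum>w\<in>supp f. f w * Q (bas w) u)" using e by simp
  also have "\<dots> = Q f"
    by (subst (2) f_expand[OF f]) (rule lo_sum[OF Q fin, symmetric])
  finally show ?thesis .
qed

lemma word_op_Nil[simp]: "word_op n [] = id" unfolding word_op_def by simp
lemma word_op_Cons[simp]: "word_op n (g # gs) = gen_op n g \<circ> word_op n gs"
  unfolding word_op_def by simp

lemma foldr_word: "foldr (\<lambda>g acc. gen_op n g \<circ> acc) xs h = word_op n xs \<circ> h"
  by (induction xs) (auto simp: word_op_def)

lemma word_op_append: "word_op n (xs @ ys) = word_op n xs \<circ> word_op n ys"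
  unfolding word_op_def foldr_append by (rule foldr_word[unfolded word_op_def])

definition pre :: "int \<Rightarrow> tvec \<Rightarrow> tvec" where
  "pre x g = (\<lambda>u. case u of [] \<Rightarrow> 0 | y # us \<Rightarrow> (if y = x then g us else 0))"

lemma bas_Cons: "bas (x # ys) = pre x (bas ys)"
  unfolding pre_def bas_def by (auto simp: fun_eq_iff split: list.split)

lemma pre_comb: "pre x (\<lambda>u. a * f u + b * g u) = (\<lambda>u. a * pre x f u + b * pre x g u)"
  unfolding pre_def by (auto simp: fun_eq_iff split: list.split)

lemma pre_scale: "pre x (\<lambda>u. a * f u) = (\<lambda>u. a * pre x f u)"
  unfolding pre_def by (auto simp: fun_eq_iff split: list.split)

lemma pre_zero: "pre x (\<lambda>u. 0) = (\<lambda>u. 0)"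
  unfolding pre_def by (auto simp: fun_eq_iff split: list.split)

lemma tens_bas1: "tens (bas1 x) g = pre x g"
  unfolding tens_def pre_def bas1_def by (auto simp: fun_eq_iff split: list.split)

lemma tens_sbas1: "tens (\<lambda>s. c * bas1 x s) g = (\<lambda>u. c * pre x g u)"
  unfolding tens_def pre_def bas1_def by (auto simp: fun_eq_iff split: list.split)

lemma tens_E1: "tens (E1 n i t) g = (if [i = t - 1] (mod int n) then pre (t - 1) g else (\<lambda>u. 0))"
  unfolding tens_def pre_def E1_def by (auto simp: fun_eq_iff split: list.split)

lemma tens_F1: "tens (F1 n i t) g = (if [i = t] (mod int n) then pre (t + 1) g else (\<lambda>u. 0))"
  unfolding tens_def pre_def F1_def by (auto simp: fun_eq_iff split: list.split)

lemma Et_Cons: "Et n i (t # ts) = (\<lambda>u.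
   (if [i = t - 1] (mod int n) then Kt n i ts * Ktinv n (i + 1) ts * bas ((t - 1) # ts) u else 0)
   + pre t (Et n i ts) u)"
  by (auto simp: fun_eq_iff tens_E1 tens_bas1 bas_Cons pre_scale)

lemma Ft_Cons: "Ft n i (t # ts) = (\<lambda>u.
   K1inv n i t * K1 n (i + 1) t * pre t (Ft n i ts) u
   + (if [i = t] (mod int n) then bas ((t + 1) # ts) u else 0))"
  by (auto simp: fun_eq_iff tens_F1 tens_sbas1 bas_Cons simp del: Ft.simps) (simp_all add: tens_F1 tens_sbas1 bas_Cons)

lemma supp_pre: "supp (pre x g) \<subseteq> (\<lambda>us. x # us) ` supp g"
proof
  fix u assume "u \<in> supp (pre x g)"
  then show "u \<in> (\<lambda>us. x # us) ` supp g"
    unfolding supp_def pre_def by (cases u) (auto split: if_splits)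
qed

lemma fs_pre[simp]: "fs g \<Longrightarrow> fs (pre x g)"
  unfolding fs_def using supp_pre finite_subset by blast

lemma fs_scale[simp]: "fs g \<Longrightarrow> fs (\<lambda>u. a * g u)"
  using fs_comb[of g g a 0] by simp

lemma fs_if[simp]: "fs f \<Longrightarrow> fs (\<lambda>u. if c then f u else 0)"
  by (cases c) auto

lemma fs_if2[simp]: "fs f \<Longrightarrow> fs (\<lambda>u. if c then a * f u else 0)"
  by (cases c) auto

lemma fs_Et[simp]: "fs (Et n i w)"
proof (induction w)
  case Nil
  then show ?case by simp
next
  case (Cons t ts)
  have 1: "fs (pre t (Et n i ts))" by (rule fs_pre[OF Cons.IH])
  have 2: "fs (\<lambda>u. (if [i = t - 1] (mod int n) then Kt n i ts * Ktinv n (i + 1) ts * bas ((t - 1) # ts) u else 0))"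
    by (cases "[i = t - 1] (mod int n)") auto
  have "fs (\<lambda>u. 1 * (if [i = t - 1] (mod int n) then Kt n i ts * Ktinv n (i + 1) ts * bas ((t - 1) # ts) u else 0)
   + 1 * pre t (Et n i ts) u)"
    by (rule fs_comb[OF 2 1])
  then show ?case by (subst Et_Cons) simp
qed

lemma fs_Ft[simp]: "fs (Ft n i w)"
proof (induction w)
  case Nil
  then show ?case by simp
next
  case (Cons t ts)
  have "fs (\<lambda>u. (K1inv n i t * K1 n (i + 1) t) * pre t (Ft n i ts) u
   + 1 * (if [i = t] (mod int n) then bas ((t + 1) # ts) u else 0))"
    apply (rule fs_comb)
    using Cons.IH by (cases "[i = t] (mod int n)") (auto intro: fs_pre)
  then show ?case by (subst Ft_Cons) simp
qed

lemma lo_gen[simp]: "lo (gen_op n g)"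
  by (cases g) (auto intro: lo_lin)

lemma lo_word[simp]: "lo (word_op n gs)"
proof (induction gs)
  case Nil
  then show ?case using lo_id by (simp add: id_def)
next
  case (Cons g gs)
  then show ?case by (simp only: word_op_Cons) (rule lo_comp'[OF lo_gen Cons.IH])
qed

lemma lo_Ts[simp]: "lo (Ts n i)"
proof -
  have "lo (\<lambda>f u. vv * word_op n [GF (int i), GE (int i)] f u + (-1) * f u)"
    by (rule lo_lc[OF lo_word lo_id])
  moreover have "(\<lambda>f u. vv * word_op n [GF (int i), GE (int i)] f u + (-1) * f u) = Ts n i"
    by (auto simp: fun_eq_iff Ts_def)
  ultimately show ?thesis by simp
qed

lemma lo_Trho[simp]: "lo (Trho n r)" unfolding Trho_def by (rule lo_word)
lemma lo_Trhoinv[simp]: "lo (Trhoinv n r)" unfolding Trhoinv_def by (rule lo_word)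

lemma lo_id': "lo id" using lo_id by (simp add: id_def)

lemma lo_pow: "lo P \<Longrightarrow> lo (P ^^ k)"
proof (induction k)
  case 0
  then show ?case using lo_id by simp
next
  case (Suc k)
  have "lo (P ^^ k)" using Suc by simp
  then show ?case by (simp only: funpow.simps) (rule lo_comp'[OF Suc.prems])
qed


declare Et.simps(2)[simp del] Ft.simps(2)[simp del]
declare Et_Cons[simp] Ft_Cons[simp]

lemma vv_nz[simp]: "vv \<noteq> 0"
  by (simp add: vv_def Zero_fract_def eq_fract)

lemma Kt_append: "Kt n i (xs @ ys) = Kt n i xs * Kt n i ys"
  by (induction xs) auto
lemma Ktinv_append: "Ktinv n i (xs @ ys) = Ktinv n i xs * Ktinv n i ys"
  by (induction xs) auto
lemma Kt_none: "\<forall>t\<in>set xs. \<not> [i = t] (mod int n) \<Longrightarrow> Kt n i xs = 1"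
  by (induction xs) (auto simp: K1_def)
lemma Ktinv_none: "\<forall>t\<in>set xs. \<not> [i = t] (mod int n) \<Longrightarrow> Ktinv n i xs = 1"
  by (induction xs) (auto simp: K1inv_def)

lemma E0: "\<forall>t\<in>set w. \<not> [i = t - 1] (mod int n) \<Longrightarrow> Et n i w = (\<lambda>u. 0)"
  by (induction w) (auto simp: Et_Cons pre_zero)

lemma F0: "\<forall>t\<in>set w. \<not> [i = t] (mod int n) \<Longrightarrow> Ft n i w = (\<lambda>u. 0)"
proof (induction w)
  case Nil
  then show ?case by simp
next
  case (Cons a w)
  then show ?case by (simp add: pre_zero)
qed

lemma Esplit:
  assumes "\<forall>t\<in>set xs. \<not> [i = t - 1] (mod int n)" "\<forall>t\<in>set ys. \<not> [i = t - 1] (mod int n)"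
    "[i = a - 1] (mod int n)"
  shows "Et n i (xs @ a # ys) = (\<lambda>u. Kt n i ys * Ktinv n (i + 1) ys * bas (xs @ (a - 1) # ys) u)"
  using assms(1)
proof (induction xs)
  case Nil
  then show ?case using assms(2,3) by (simp add: Et_Cons E0 pre_zero)
next
  case (Cons x xs)
  then show ?case by (simp add: Et_Cons pre_scale bas_Cons)
qed

lemma F1split:
  assumes "\<forall>t\<in>set xs. \<not> [i = t] (mod int n)" "\<forall>t\<in>set ys. \<not> [i = t] (mod int n)"
    "[i = a] (mod int n)"
  shows "Ft n i (xs @ a # ys) = (\<lambda>u. Ktinv n i xs * Kt n (i + 1) xs * bas (xs @ (a + 1) # ys) u)"
  using assms(1)
proof (induction xs)
  case Nil
  then show ?case using assms(2,3) by (simp add: F0 pre_zero)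
next
  case (Cons x xs)
  then show ?case
    by (simp add: pre_scale bas_Cons K1inv_def algebra_simps)
qed

lemma F2split:
  assumes "\<forall>t\<in>set xs. \<not> [i = t] (mod int n)" "\<forall>t\<in>set ys. \<not> [i = t] (mod int n)"
    "\<forall>t\<in>set zs. \<not> [i = t] (mod int n)"
    "[i = a] (mod int n)" "[i = b] (mod int n)"
  shows "Ft n i (xs @ a # ys @ b # zs) = (\<lambda>u.
     Ktinv n i xs * Kt n (i + 1) xs * bas (xs @ (a + 1) # ys @ b # zs) u
   + Ktinv n i (xs @ a # ys) * Kt n (i + 1) (xs @ a # ys) * bas (xs @ a # ys @ (b + 1) # zs) u)"
  using assms(1)
proof (induction xs)
  case Nil
  have "Ft n i (ys @ b # zs) = (\<lambda>u. Ktinv n i ys * Kt n (i + 1) ys * bas (ys @ (b + 1) # zs) u)"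
    by (rule F1split) (use assms in auto)
  then show ?case using assms
    by (simp add: pre_scale bas_Cons K1inv_def algebra_simps)
next
  case (Cons x xs)
  then show ?case
    by (simp add: pre_scale pre_comb bas_Cons K1inv_def algebra_simps)
qed


lemma cong_E: "[i = t - 1] (mod int n) \<longleftrightarrow> rs n t = rs n (i + 1)"
proof -
  have "[i + 1 = (t - 1) + 1] (mod int n) \<longleftrightarrow> [i = t - 1] (mod int n)"
    by (rule cong_add_rcancel)
  then have "[i = t - 1] (mod int n) \<longleftrightarrow> [i + 1 = t - 1 + 1] (mod int n)" by simp
  also have "\<dots> \<longleftrightarrow> rs n t = rs n (i + 1)" by (simp add: cong_rs eq_commute)
  finally show ?thesis .
qed

lemma cong_F: "[i = t] (mod int n) \<longleftrightarrow> rs n t = rs n i"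
  by (simp add: cong_rs eq_commute)

lemma K1_eq: "K1 n i t = (if rs n t = rs n i then vv else 1)"
  unfolding K1_def cong_F ..
lemma K1inv_eq: "K1inv n i t = (if rs n t = rs n i then inverse vv else 1)"
  unfolding K1inv_def cong_F ..

definition free :: "nat \<Rightarrow> int \<Rightarrow> int list \<Rightarrow> bool" where
  "free n c xs \<longleftrightarrow> (\<forall>t\<in>set xs. rs n t \<noteq> c)"

lemma free_simps[simp]: "free n c [] " "free n c (x # xs) \<longleftrightarrow> rs n x \<noteq> c \<and> free n c xs"
  "free n c (xs @ ys) \<longleftrightarrow> free n c xs \<and> free n c ys"
  unfolding free_def by auto

lemma Kt_free: "free n (rs n i) xs \<Longrightarrow> Kt n i xs = 1"
  by (rule Kt_none) (auto simp: free_def cong_F)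
lemma Ktinv_free: "free n (rs n i) xs \<Longrightarrow> Ktinv n i xs = 1"
  by (rule Ktinv_none) (auto simp: free_def cong_F)

lemma Ts_unfold: "Ts n i f = (\<lambda>u. vv * lin (Ft n (int i)) (lin (Et n (int i)) f) u - f u)"
  unfolding Ts_def by simp

lemma lin_scale_bas: "lin X (\<lambda>u. c * bas L u) = (\<lambda>u. c * X L u)"
proof -
  have "lo (lin X) \<or> True" by simp
  show ?thesis
  proof (cases "c = 0")
    case True
    then show ?thesis by (simp add: lin_def)
  next
    case False
    have "supp (\<lambda>u. c * bas L u) \<subseteq> {L}" unfolding supp_def bas_def by auto
    then have "\<And>u. lin X (\<lambda>u. c * bas L u) u = (\<Sum>w\<in>{L}. c * bas L w * X w u)"
      by (rule lin_alt) simp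
    then show ?thesis by (simp add: bas_def fun_eq_iff)
  qed
qed

lemma TsA:
  fixes i :: nat
  assumes i: "1 \<le> i" "i + 1 < n"
    and a: "rs n a = int i" and b: "rs n b = int i + 1"
    and fr: "free n (int i) xs" "free n (int i) ys" "free n (int i) zs"
      "free n (int i + 1) xs" "free n (int i + 1) ys" "free n (int i + 1) zs"
  shows "Ts n i (bas (xs @ a # ys @ b # zs)) = (\<lambda>u. vv * bas (xs @ (a + 1) # ys @ (b - 1) # zs) u)"
proof -
  have n: "n > 0" using i by simp
  have ri: "rs n (int i) = int i" using i by (intro rs_id) auto
  have ri1: "rs n (int i + 1) = int i + 1" using i by (intro rs_id) auto
  have b1: "rs n (b - 1) = int i" using rs_minus1[OF n, of b] b i by simp
  have "Et n (int i) ((xs @ a # ys) @ b # zs) =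
     (\<lambda>u. Kt n (int i) zs * Ktinv n (int i + 1) zs * bas ((xs @ a # ys) @ (b - 1) # zs) u)"
    by (rule Esplit) (use fr a b i ri1 in \<open>auto simp: cong_E free_def\<close>)
  moreover have "Kt n (int i) zs = 1" by (rule Kt_free) (simp add: ri fr)
  moreover have "Ktinv n (int i + 1) zs = 1" by (rule Ktinv_free) (simp add: ri1 fr)
  ultimately have E: "Et n (int i) (xs @ a # ys @ b # zs) = bas (xs @ a # ys @ (b - 1) # zs)"
    by simp
  have F: "Ft n (int i) (xs @ a # ys @ (b - 1) # zs) = (\<lambda>u.
     Ktinv n (int i) xs * Kt n (int i + 1) xs * bas (xs @ (a + 1) # ys @ (b - 1) # zs) u
   + Ktinv n (int i) (xs @ a # ys) * Kt n (int i + 1) (xs @ a # ys) * bas (xs @ a # ys @ (b - 1 + 1) # zs) u)"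
    by (rule F2split) (use fr a b1 ri in \<open>auto simp: cong_F free_def\<close>)
  have c1: "Ktinv n (int i) xs = 1" by (rule Ktinv_free) (simp add: ri fr)
  have c2: "Kt n (int i + 1) xs = 1" by (rule Kt_free) (simp add: ri1 fr)
  have c3: "Ktinv n (int i) (xs @ a # ys) = inverse vv"
    using fr by (simp add: Ktinv_append Ktinv_free ri K1inv_eq a)
  have c4: "Kt n (int i + 1) (xs @ a # ys) = 1"
    using fr by (simp add: Kt_append Kt_free ri1 K1_eq a)
  show ?thesis
    unfolding Ts_unfold lin_bas E F c1 c2 c3 c4
    by (simp add: fun_eq_iff field_simps)
qed

lemma TsB:
  fixes i :: nat
  assumes i: "1 \<le> i" "i + 1 < n"
    and a: "rs n a = int i" and b: "rs n b = int i + 1"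
    and fr: "free n (int i) xs" "free n (int i) ys" "free n (int i) zs"
      "free n (int i + 1) xs" "free n (int i + 1) ys" "free n (int i + 1) zs"
  shows "Ts n i (bas (xs @ b # ys @ a # zs)) = (\<lambda>u. (vv^2 - 1) * bas (xs @ b # ys @ a # zs) u
     + vv * bas (xs @ (b - 1) # ys @ (a + 1) # zs) u)"
proof -
  have n: "n > 0" using i by simp
  have ri: "rs n (int i) = int i" using i by (intro rs_id) auto
  have ri1: "rs n (int i + 1) = int i + 1" using i by (intro rs_id) auto
  have b1: "rs n (b - 1) = int i" using rs_minus1[OF n, of b] b i by simp
  have "Et n (int i) (xs @ b # (ys @ a # zs)) =
     (\<lambda>u. Kt n (int i) (ys @ a # zs) * Ktinv n (int i + 1) (ys @ a # zs) * bas (xs @ (b - 1) # (ys @ a # zs)) u)"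
    by (rule Esplit) (use fr a b i ri1 in \<open>auto simp: cong_E free_def\<close>)
  moreover have "Kt n (int i) (ys @ a # zs) = vv"
    using fr by (simp add: Kt_append Kt_free ri K1_eq a)
  moreover have "Ktinv n (int i + 1) (ys @ a # zs) = 1"
    using fr by (simp add: Ktinv_append Ktinv_free ri1 K1inv_eq a)
  ultimately have E: "Et n (int i) (xs @ b # ys @ a # zs) = (\<lambda>u. vv * bas (xs @ (b - 1) # ys @ a # zs) u)"
    by simp
  have F: "Ft n (int i) (xs @ (b - 1) # ys @ a # zs) = (\<lambda>u.
     Ktinv n (int i) xs * Kt n (int i + 1) xs * bas (xs @ (b - 1 + 1) # ys @ a # zs) u
   + Ktinv n (int i) (xs @ (b - 1) # ys) * Kt n (int i + 1) (xs @ (b - 1) # ys) * bas (xs @ (b - 1) # ys @ (a + 1) # zs) u)"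
    by (rule F2split) (use fr a b1 ri in \<open>auto simp: cong_F free_def\<close>)
  have c1: "Ktinv n (int i) xs = 1" by (rule Ktinv_free) (simp add: ri fr)
  have c2: "Kt n (int i + 1) xs = 1" by (rule Kt_free) (simp add: ri1 fr)
  have c3: "Ktinv n (int i) (xs @ (b - 1) # ys) = inverse vv"
    using fr by (simp add: Ktinv_append Ktinv_free ri K1inv_eq b1)
  have c4: "Kt n (int i + 1) (xs @ (b - 1) # ys) = 1"
    using fr by (simp add: Kt_append Kt_free ri1 K1_eq b1)
  show ?thesis
    unfolding Ts_unfold lin_bas E lin_scale_bas F c1 c2 c3 c4
    by (simp add: fun_eq_iff field_simps power2_eq_square)
qed


definition uniq :: "nat \<Rightarrow> int \<Rightarrow> int list \<Rightarrow> bool" where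
  "uniq n c w \<longleftrightarrow> length (filter (\<lambda>t. rs n t = c) w) = 1"

definition good :: "nat \<Rightarrow> nat \<Rightarrow> int list \<Rightarrow> bool" where
  "good n r w \<longleftrightarrow> length w = r \<and> (\<forall>t\<in>set w. rs n t \<le> int r) \<and>
     (\<forall>c. 1 \<le> c \<and> c \<le> int r \<longrightarrow> uniq n c w)"

lemma split1:
  assumes "length (filter P w) = Suc 0"
  shows "\<exists>xs a ys. w = xs @ a # ys \<and> P a \<and> (\<forall>t\<in>set xs. \<not> P t) \<and> (\<forall>t\<in>set ys. \<not> P t)"
proof -
  obtain a where "filter P w = [a]" using assms by (auto simp: length_Suc_conv)
  from filter_eq_ConsD[OF this] obtain us vs where
    "w = us @ a # vs" "\<forall>u\<in>set us. \<not> P u" "P a" "[] = filter P vs" by blast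
  moreover from this(4) have "\<forall>t\<in>set vs. \<not> P t" by (metis filter_empty_conv)
  ultimately show ?thesis by blast
qed

lemma uniq_split:
  assumes "uniq n c w"
  shows "\<exists>xs a ys. w = xs @ a # ys \<and> rs n a = c \<and> free n c xs \<and> free n c ys"
  using split1[of "\<lambda>t. rs n t = c" w] assms unfolding uniq_def free_def by auto

lemma len0_free: "length (filter (\<lambda>t. rs n t = c) xs) = 0 \<Longrightarrow> free n c xs"
  unfolding free_def by (simp add: filter_empty_conv)

lemma split2:
  assumes "uniq n c w" "uniq n d w" "c \<noteq> d"
  shows "(\<exists>xs a ys b zs. w = xs @ a # ys @ b # zs \<and> rs n a = c \<and> rs n b = d \<and>
            free n c xs \<and> free n c ys \<and> free n c zs \<and> free n d xs \<and> free n d ys \<and> free n d zs)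
       \<or> (\<exists>xs a ys b zs. w = xs @ b # ys @ a # zs \<and> rs n a = c \<and> rs n b = d \<and>
            free n c xs \<and> free n c ys \<and> free n c zs \<and> free n d xs \<and> free n d ys \<and> free n d zs)"
proof -
  obtain xs a ys where w: "w = xs @ a # ys" "rs n a = c" "free n c xs" "free n c ys"
    using uniq_split[OF assms(1)] by blast
  have "length (filter (\<lambda>t. rs n t = d) xs) + length (filter (\<lambda>t. rs n t = d) ys) = 1"
    using assms(2,3) w unfolding uniq_def by simp
  then consider "length (filter (\<lambda>t. rs n t = d) xs) = Suc 0" "length (filter (\<lambda>t. rs n t = d) ys) = 0"
    | "length (filter (\<lambda>t. rs n t = d) xs) = 0" "length (filter (\<lambda>t. rs n t = d) ys) = Suc 0"
    by linarith
  then show ?thesis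
  proof cases
    case 1
    obtain xs1 b xs2 where x: "xs = xs1 @ b # xs2" "rs n b = d" "\<forall>t\<in>set xs1. rs n t \<noteq> d" "\<forall>t\<in>set xs2. rs n t \<noteq> d"
      using split1[OF 1(1)] by blast
    have "w = xs1 @ b # xs2 @ a # ys" using w x by simp
    moreover have "free n c xs1" "free n c xs2" using w(3) x(1) by auto
    moreover have "free n d xs1" "free n d xs2" using x unfolding free_def by auto
    moreover have "free n d ys" using len0_free 1(2) by blast
    ultimately show ?thesis using w x(2) by blast
  next
    case 2
    obtain ys1 b ys2 where x: "ys = ys1 @ b # ys2" "rs n b = d" "\<forall>t\<in>set ys1. rs n t \<noteq> d" "\<forall>t\<in>set ys2. rs n t \<noteq> d"
      using split1[OF 2(2)] by blast
    have "w = xs @ a # ys1 @ b # ys2" using w x by simp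
    moreover have "free n c ys1" "free n c ys2" using w(4) x(1) by auto
    moreover have "free n d ys1" "free n d ys2" using x unfolding free_def by auto
    moreover have "free n d xs" using len0_free 2(1) by blast
    ultimately show ?thesis using w x(2) by blast
  qed
qed

definition befp :: "nat \<Rightarrow> int \<Rightarrow> int \<Rightarrow> int list \<Rightarrow> bool" where
  "befp n c d w \<longleftrightarrow> (\<exists>x\<in>set (takeWhile (\<lambda>t. rs n t \<noteq> d) w). rs n x = c)"

definition sw :: "nat \<Rightarrow> int \<Rightarrow> int \<Rightarrow> int" where
  "sw n i t = (if rs n t = i then t + 1 else if rs n t = i + 1 then t - 1 else t)"

lemma map_sw_free: "free n c xs \<Longrightarrow> free n (c + 1) xs \<Longrightarrow> map (sw n c) xs = xs"
  unfolding free_def sw_def by (induction xs) auto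

lemma takeWhile_free: "free n d xs \<Longrightarrow> takeWhile (\<lambda>t. rs n t \<noteq> d) (xs @ ys) = xs @ takeWhile (\<lambda>t. rs n t \<noteq> d) ys"
  unfolding free_def by (induction xs) auto

lemma befpA: "rs n a = c \<Longrightarrow> rs n b = d \<Longrightarrow> c \<noteq> d \<Longrightarrow> free n d xs \<Longrightarrow> free n d ys \<Longrightarrow>
   befp n c d (xs @ a # ys @ b # zs)"
  unfolding befp_def by (simp add: takeWhile_free)

lemma befpB: "rs n a = c \<Longrightarrow> rs n b = d \<Longrightarrow> free n c xs \<Longrightarrow> free n d xs \<Longrightarrow>
   \<not> befp n c d (xs @ b # ys @ a # zs)"
  unfolding befp_def using takeWhile_free[of n d xs "b # ys @ a # zs"] by (auto simp: free_def)

lemma rs_pos: "n > 0 \<Longrightarrow> 1 \<le> rs n t" using rs_range by blast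

lemma Ts_good:
  fixes i :: nat
  assumes g: "good n r w" and i: "1 \<le> i" "i < r" and nr: "r < n"
  shows "Ts n i (bas w) = (\<lambda>u. (if befp n (int i) (int i + 1) w then 0 else vv^2 - 1) * bas w u
           + vv * bas (map (sw n (int i)) w) u)"
proof -
  have n: "n > 0" using nr by simp
  have u1: "uniq n (int i) w" "uniq n (int i + 1) w" using g i unfolding good_def by auto
  have i1: "i + 1 < n" using i nr by simp
  have ne: "int i \<noteq> int i + 1" by simp
  from split2[OF u1 ne] show ?thesis
  proof (elim disjE exE conjE)
    fix xs a ys b zs
    assume h: "w = xs @ a # ys @ b # zs" "rs n a = int i" "rs n b = int i + 1"
      "free n (int i) xs" "free n (int i) ys" "free n (int i) zs"
      "free n (int i + 1) xs" "free n (int i + 1) ys" "free n (int i + 1) zs"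
    have "befp n (int i) (int i + 1) w" unfolding h(1) by (rule befpA) (use h in auto)
    moreover have "map (sw n (int i)) w = xs @ (a + 1) # ys @ (b - 1) # zs"
      using h by (simp add: map_sw_free sw_def)
    ultimately show ?thesis unfolding h(1) using TsA[OF i(1) i1 h(2-)] by simp
  next
    fix xs a ys b zs
    assume h: "w = xs @ b # ys @ a # zs" "rs n a = int i" "rs n b = int i + 1"
      "free n (int i) xs" "free n (int i) ys" "free n (int i) zs"
      "free n (int i + 1) xs" "free n (int i + 1) ys" "free n (int i + 1) zs"
    have "\<not> befp n (int i) (int i + 1) w" unfolding h(1) by (rule befpB) (use h in auto)
    moreover have "map (sw n (int i)) w = xs @ (b - 1) # ys @ (a + 1) # zs"
      using h by (simp add: map_sw_free sw_def)
    ultimately show ?thesis unfolding h(1) using TsB[OF i(1) i1 h(2-)] by simp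
  qed
qed

lemma good_map:
  assumes g: "good n r w" and nr: "r < n"
    and f: "\<forall>t\<in>set w. rs n (f t) = \<phi> (rs n t)"
    and phi: "\<forall>c\<in>{1..int r}. \<phi> c \<in> {1..int r}" "inj_on \<phi> {1..int r}"
  shows "good n r (map f w)"
proof -
  have n: "n > 0" using nr by simp
  have rng: "\<forall>t\<in>set w. rs n t \<in> {1..int r}" using g rs_pos[OF n] unfolding good_def by auto
  have surj: "\<phi> ` {1..int r} = {1..int r}" using phi by (intro endo_inj_surj) auto
  have "uniq n c (map f w)" if c: "1 \<le> c" "c \<le> int r" for c
  proof -
    obtain b where b: "b \<in> {1..int r}" "\<phi> b = c" using surj c
      by (metis atLeastAtMost_iff imageE)
    have "filter (\<lambda>t. rs n (f t) = c) w = filter (\<lambda>t. rs n t = b) w"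
    proof (rule filter_cong)
      fix t assume "t \<in> set w"
      then show "(rs n (f t) = c) = (rs n t = b)"
        using f rng b phi(2) by (metis inj_onD)
    qed simp
    then show ?thesis using g b unfolding uniq_def good_def by (simp add: filter_map comp_def)
  qed
  moreover have "\<forall>t\<in>set (map f w). rs n t \<le> int r" using f rng phi(1) by auto
  ultimately show ?thesis using g unfolding good_def by simp
qed

lemma Emap:
  fixes k :: nat
  assumes g: "good n r w" and c: "1 \<le> c" "c \<le> int r"
    and h1: "\<forall>t\<in>set w. rs n (f t) = rs n (int k + 1) \<longleftrightarrow> rs n t = c"
    and h2: "\<forall>t\<in>set w. rs n (f t) \<noteq> rs n (int k)"
  shows "Et n (int k) (map f w) = bas (map (\<lambda>t. if rs n t = c then f t - 1 else f t) w)"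
proof -
  obtain xs a ys where s: "w = xs @ a # ys" "rs n a = c" "free n c xs" "free n c ys"
    using uniq_split g c unfolding good_def by blast
  have "Et n (int k) (map f xs @ f a # map f ys) =
     (\<lambda>u. Kt n (int k) (map f ys) * Ktinv n (int k + 1) (map f ys) * bas (map f xs @ (f a - 1) # map f ys) u)"
    by (rule Esplit) (use s h1 h2 in \<open>auto simp: cong_E free_def\<close>)
  moreover have "Kt n (int k) (map f ys) = 1" by (rule Kt_free) (use s h2 in \<open>auto simp: free_def\<close>)
  moreover have "Ktinv n (int k + 1) (map f ys) = 1" by (rule Ktinv_free) (use s h1 in \<open>auto simp: free_def\<close>)
  moreover have m1: "map (\<lambda>t. if rs n t = c then f t - 1 else f t) xs = map f xs"
    using s by (auto simp: free_def)
  moreover have m2: "map (\<lambda>t. if rs n t = c then f t - 1 else f t) ys = map f ys"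
    using s by (auto simp: free_def)
  ultimately show ?thesis using s(2) by (simp only: s(1) map_append list.map mult_1_left if_True simp_thms)
qed

lemma Fmap:
  fixes k :: nat
  assumes g: "good n r w" and c: "1 \<le> c" "c \<le> int r"
    and h1: "\<forall>t\<in>set w. rs n (f t) = rs n (int k) \<longleftrightarrow> rs n t = c"
    and h2: "\<forall>t\<in>set w. rs n (f t) \<noteq> rs n (int k + 1)"
  shows "Ft n (int k) (map f w) = bas (map (\<lambda>t. if rs n t = c then f t + 1 else f t) w)"
proof -
  obtain xs a ys where s: "w = xs @ a # ys" "rs n a = c" "free n c xs" "free n c ys"
    using uniq_split g c unfolding good_def by blast
  have "Ft n (int k) (map f xs @ f a # map f ys) =
     (\<lambda>u. Ktinv n (int k) (map f xs) * Kt n (int k + 1) (map f xs) * bas (map f xs @ (f a + 1) # map f ys) u)"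
    by (rule F1split) (use s h1 h2 in \<open>auto simp: cong_F free_def\<close>)
  moreover have "Ktinv n (int k) (map f xs) = 1" by (rule Ktinv_free) (use s h1 in \<open>auto simp: free_def\<close>)
  moreover have "Kt n (int k + 1) (map f xs) = 1" by (rule Kt_free) (use s h2 in \<open>auto simp: free_def\<close>)
  moreover have m1: "map (\<lambda>t. if rs n t = c then f t + 1 else f t) xs = map f xs"
    using s by (auto simp: free_def)
  moreover have m2: "map (\<lambda>t. if rs n t = c then f t + 1 else f t) ys = map f ys"
    using s by (auto simp: free_def)
  ultimately show ?thesis using s(2) by (simp only: s(1) map_append list.map mult_1_left if_True simp_thms)
qed

lemma wt_filter:
  assumes "1 \<le> i" "i \<le> n"
  shows "wt n w i = length (filter (\<lambda>t. rs n t = int i) w)"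
proof -
  have "rs n (int i) = int i" using assms by (intro rs_id) auto
  then show ?thesis
    unfolding wt_def length_filter_conv_card cong_rs by simp
qed

lemma Vomega_iff:
  assumes nr: "r < n"
  shows "Vomega n r f \<longleftrightarrow> fs f \<and> (\<forall>w. f w \<noteq> 0 \<longrightarrow> good n r w)"
proof -
  have n: "n > 0" using nr by simp
  have eq: "(length w = r \<and> (\<forall>i\<in>{1..n}. wt n w i = (if i \<le> r then 1 else 0))) \<longleftrightarrow> good n r w" for w
  proof
    assume h: "length w = r \<and> (\<forall>i\<in>{1..n}. wt n w i = (if i \<le> r then 1 else 0))"
    have "rs n t \<le> int r" if t: "t \<in> set w" for t
    proof (rule ccontr)
      assume "\<not> rs n t \<le> int r"
      then have "nat (rs n t) > r" by simp
      moreover have "1 \<le> nat (rs n t)" "nat (rs n t) \<le> n" using rs_range[OF n, of t] by auto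
      moreover have "filter (\<lambda>s. rs n s = rs n t) w \<noteq> []" using t by (auto simp: filter_empty_conv)
      ultimately show False using h wt_filter[of "nat (rs n t)" n w] rs_range[OF n, of t] by auto
    qed
    moreover have "uniq n c w" if c: "1 \<le> c" "c \<le> int r" for c
    proof -
      have "nat c \<in> {1..n}" "nat c \<le> r" using c nr by auto
      then have "wt n w (nat c) = 1" using h by auto
      then show ?thesis using wt_filter[of "nat c" n w] c nr unfolding uniq_def by auto
    qed
    ultimately show "good n r w" using h unfolding good_def by auto
  next
    assume g: "good n r w"
    have "wt n w i = (if i \<le> r then 1 else 0)" if i: "i \<in> {1..n}" for i
    proof (cases "i \<le> r")
      case True
      then show ?thesis using g i wt_filter[of i n w] unfolding good_def uniq_def by auto
    next
      case False
      then have "filter (\<lambda>t. rs n t = int i) w = []" using g unfolding good_def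
        by (auto simp: filter_empty_conv)
      then show ?thesis using False i wt_filter[of i n w] by auto
    qed
    then show "length w = r \<and> (\<forall>i\<in>{1..n}. wt n w i = (if i \<le> r then 1 else 0))"
      using g unfolding good_def by auto
  qed
  show ?thesis unfolding Vomega_def fs_def supp_def using eq by blast
qed


definition fA :: "nat \<Rightarrow> nat \<Rightarrow> int \<Rightarrow> int" where
  "fA n m t = (if rs n t \<le> int m + 1 then t - 1 else t)"
definition fB :: "nat \<Rightarrow> nat \<Rightarrow> int \<Rightarrow> int" where
  "fB n k t = (if rs n t = 1 then t - 1 - int (n - k) else t - 1)"
definition fC :: "nat \<Rightarrow> nat \<Rightarrow> int \<Rightarrow> int" where
  "fC n k t = (if rs n t \<ge> int k then t + 1 else t)"
definition fD :: "nat \<Rightarrow> nat \<Rightarrow> nat \<Rightarrow> int \<Rightarrow> int" where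
  "fD n r m t = (if rs n t = int r then t + 1 + int (m - r) else t + 1)"

definition rho :: "nat \<Rightarrow> nat \<Rightarrow> int \<Rightarrow> int" where
  "rho n r t = (if rs n t = 1 then t - 1 - int (n - r) else t - 1)"
definition sig :: "nat \<Rightarrow> nat \<Rightarrow> int \<Rightarrow> int" where
  "sig n r t = (if rs n t = int r then t + 1 + int (n - r) else t + 1)"

lemma good_rng: "good n r w \<Longrightarrow> n > 0 \<Longrightarrow> t \<in> set w \<Longrightarrow> 1 \<le> rs n t \<and> rs n t \<le> int r"
  unfolding good_def using rs_pos by auto

lemma rs_nat: "1 \<le> k \<Longrightarrow> k \<le> n \<Longrightarrow> rs n (int k) = int k"
  by (rule rs_id) auto

lemma rs_shift: "rs n t = a \<Longrightarrow> rs n (t + c) = rs n (a + c)"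
  using rs_plus by metis

lemma rs_L1: "rs n t = 1 \<Longrightarrow> m \<le> n \<Longrightarrow> rs n (t - 1 - int (n - m)) = rs n (int m)"
proof -
  assume t: "rs n t = 1" and m: "m \<le> n"
  have "rs n (t + (- 1 - int (n - m))) = rs n (1 + (- 1 - int (n - m)))" by (rule rs_shift[OF t])
  also have "1 + (- 1 - int (n - m)) = int m - int n" using m by simp
  also have "rs n (int m - int n) = rs n (int m)" by (rule rs_subn)
  finally show ?thesis by (simp add: algebra_simps)
qed

lemma rs_L2: "rs n t = a \<Longrightarrow> rs n (t + 1 + c) = rs n (a + 1 + c)"
  using rs_shift[of n t a "1 + c"] by (simp add: algebra_simps)

context
  fixes n r :: nat and w :: "int list"
  assumes g: "good n r w" and r1: "1 \<le> r" and nr: "r < n"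
begin

lemma n0: "n > 0" using nr by simp

lemma rng: "t \<in> set w \<Longrightarrow> 1 \<le> rs n t \<and> rs n t \<le> int r"
  using good_rng[OF g n0] by blast

lemma stepEn: "word_op n [GE (int n)] (bas w) = bas (map (fA n 0) w)"
proof -
  have "Et n (int n) (map id w) = bas (map (\<lambda>t. if rs n t = 1 then id t - 1 else id t) w)"
  proof (rule Emap[OF g])
    show "\<forall>t\<in>set w. (rs n (id t) = rs n (int n + 1)) = (rs n t = 1)" by (simp add: rs_n1)
    show "\<forall>t\<in>set w. rs n (id t) \<noteq> rs n (int n)" using rng nr rs_nat[of n n] by fastforce
  qed (use r1 in auto)
  moreover have "map (\<lambda>t. if rs n t = 1 then id t - 1 else id t) w = map (fA n 0) w"
    by (intro map_cong refl) (auto simp: fA_def dest: rng)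
  ultimately show ?thesis by simp
qed

lemma chainA: "m \<le> r - 1 \<Longrightarrow>
  word_op n (map (\<lambda>k. GE (int k)) (rev [1..<m+1])) (bas (map (fA n 0) w)) = bas (map (fA n m) w)"
proof (induction m)
  case 0
  then show ?case by simp
next
  case (Suc m)
  have e: "rev [1..<Suc m + 1] = Suc m # rev [1..<m+1]" by simp
  have IH: "word_op n (map (\<lambda>k. GE (int k)) (rev [1..<m+1])) (bas (map (fA n 0) w)) = bas (map (fA n m) w)"
    using Suc by simp
  have mr: "int m + 2 \<le> int r" using Suc r1 by simp
  have "Et n (int (Suc m)) (map (fA n m) w) = bas (map (\<lambda>t. if rs n t = int m + 2 then fA n m t - 1 else fA n m t) w)"
  proof (rule Emap[OF g])
    show "\<forall>t\<in>set w. (rs n (fA n m t) = rs n (int (Suc m) + 1)) = (rs n t = int m + 2)"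
    proof
      fix t assume t: "t \<in> set w"
      have "rs n (int m + 2) = int m + 2" using mr nr by (intro rs_id) auto
      then have "rs n (int (Suc m) + 1) = int m + 2" by (simp add: algebra_simps)
      then show "(rs n (fA n m t) = rs n (int (Suc m) + 1)) = (rs n t = int m + 2)"
        using rng[OF t] mr nr by (auto simp: fA_def rs_minus1[OF n0])
    qed
    show "\<forall>t\<in>set w. rs n (fA n m t) \<noteq> rs n (int (Suc m))"
    proof
      fix t assume t: "t \<in> set w"
      have h: "rs n (1 + int m) = 1 + int m" using mr nr by (intro rs_id) auto
      then have "rs n (int (Suc m)) = int m + 1" by simp
      then show "rs n (fA n m t) \<noteq> rs n (int (Suc m))"
        using rng[OF t] mr nr by (auto simp: fA_def rs_minus1[OF n0])
    qed
  qed (use mr in auto)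
  moreover have "map (\<lambda>t. if rs n t = int m + 2 then fA n m t - 1 else fA n m t) w = map (fA n (Suc m)) w"
    using rng by (auto simp: fA_def)
  ultimately show ?case unfolding e using IH by simp
qed

lemma chainB: "r \<le> k \<Longrightarrow> k \<le> n \<Longrightarrow>
  word_op n (map (\<lambda>k. GE (int k)) [k..<n]) (bas (map (fA n (r - 1)) w)) = bas (map (fB n k) w)"
proof (induction "n - k" arbitrary: k)
  case 0
  then have k: "k = n" by simp
  have m: "map (fA n (r - 1)) w = map (fB n k) w"
    by (intro map_cong refl) (use r1 k in \<open>auto simp: fA_def fB_def dest: rng\<close>)
  show ?case unfolding m using k by simp
next
  case (Suc d)
  have kn: "k < n" using Suc by simp
  have e: "[k..<n] = k # [Suc k..<n]" using kn by (simp add: upt_conv_Cons)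
  have IH: "word_op n (map (\<lambda>k. GE (int k)) [Suc k..<n]) (bas (map (fA n (r - 1)) w)) = bas (map (fB n (Suc k)) w)"
    using Suc kn by simp
  have rk1: "rs n (int k + 1) = int k + 1" using kn by (intro rs_id) auto
  have rk: "rs n (int k) = int k" using kn Suc r1 by (intro rs_id) auto
  have "Et n (int k) (map (fB n (Suc k)) w) = bas (map (\<lambda>t. if rs n t = 1 then fB n (Suc k) t - 1 else fB n (Suc k) t) w)"
  proof (rule Emap[OF g])
    show "\<forall>t\<in>set w. (rs n (fB n (Suc k) t) = rs n (int k + 1)) = (rs n t = 1)"
    proof
      fix t assume t: "t \<in> set w"
      show "(rs n (fB n (Suc k) t) = rs n (int k + 1)) = (rs n t = 1)"
      proof (cases "rs n t = 1")
        case True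
        then show ?thesis using rs_L1[OF True, of "Suc k"] kn by (simp add: fB_def algebra_simps)
      next
        case False
        then show ?thesis using rng[OF t] rk1 Suc(3) by (auto simp: fB_def rs_minus1[OF n0])
      qed
    qed
    show "\<forall>t\<in>set w. rs n (fB n (Suc k) t) \<noteq> rs n (int k)"
    proof
      fix t assume t: "t \<in> set w"
      show "rs n (fB n (Suc k) t) \<noteq> rs n (int k)"
      proof (cases "rs n t = 1")
        case True
        then show ?thesis using rs_L1[OF True, of "Suc k"] kn rk rk1 by (simp add: fB_def algebra_simps)
      next
        case False
        then show ?thesis using rng[OF t] rk Suc(3) by (auto simp: fB_def rs_minus1[OF n0])
      qed
    qed
  qed (use r1 in auto)
  moreover have "map (\<lambda>t. if rs n t = 1 then fB n (Suc k) t - 1 else fB n (Suc k) t) w = map (fB n k) w"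
    using kn by (auto simp: fB_def of_nat_diff)
  ultimately show ?case unfolding e using IH by simp
qed

lemma Trho_bas: "Trho n r (bas w) = bas (map (rho n r) w)"
proof -
  have e: "rev [1..<r] = rev [1..<(r - 1) + 1]" using r1 by simp
  have "Trho n r (bas w) = word_op n (map (\<lambda>k. GE (int k)) [r..<n])
      (word_op n (map (\<lambda>k. GE (int k)) (rev [1..<(r - 1) + 1])) (word_op n [GE (int n)] (bas w)))"
    unfolding Trho_def word_op_append e by simp
  also have "\<dots> = bas (map (fB n r) w)"
    unfolding stepEn chainA[OF order.refl] using chainB nr by simp
  moreover have "fB n r = rho n r" by (simp add: fun_eq_iff fB_def rho_def)
  ultimately show ?thesis by simp
qed

lemma chainC: "1 \<le> k \<Longrightarrow> k \<le> r + 1 \<Longrightarrow>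
  word_op n (map (\<lambda>k. GF (int k)) [k..<r+1]) (bas w) = bas (map (fC n k) w)"
proof (induction "r + 1 - k" arbitrary: k)
  case 0
  then have k: "k = r + 1" by simp
  have "map (fC n k) w = w"
    by (rule map_idI) (use k in \<open>auto simp: fC_def dest: rng\<close>)
  then show ?case using k by simp
next
  case (Suc d)
  have kr: "k \<le> r" using Suc by simp
  have e: "[k..<r+1] = k # [Suc k..<r+1]" using kr by (simp add: upt_conv_Cons)
  have IH: "word_op n (map (\<lambda>k. GF (int k)) [Suc k..<r+1]) (bas w) = bas (map (fC n (Suc k)) w)"
    using Suc kr by simp
  have rk1: "rs n (int k + 1) = int k + 1" using kr nr by (intro rs_id) auto
  have rk: "rs n (int k) = int k" using kr nr Suc by (intro rs_id) auto
  have "Ft n (int k) (map (fC n (Suc k)) w) = bas (map (\<lambda>t. if rs n t = int k then fC n (Suc k) t + 1 else fC n (Suc k) t) w)"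
  proof (rule Fmap[OF g])
    show "\<forall>t\<in>set w. (rs n (fC n (Suc k) t) = rs n (int k)) = (rs n t = int k)"
      using rk nr by (auto simp: fC_def rs_plus1[OF n0] dest: rng)
    show "\<forall>t\<in>set w. rs n (fC n (Suc k) t) \<noteq> rs n (int k + 1)"
      using rk1 nr by (auto simp: fC_def rs_plus1[OF n0] dest: rng)
  qed (use Suc kr in auto)
  moreover have "map (\<lambda>t. if rs n t = int k then fC n (Suc k) t + 1 else fC n (Suc k) t) w = map (fC n k) w"
    by (auto simp: fC_def)
  ultimately show ?case unfolding e using IH by simp
qed

lemma chainD: "r \<le> m \<Longrightarrow> m \<le> n - 1 \<Longrightarrow>
  word_op n (map (\<lambda>k. GF (int k)) (rev [r+1..<m+1])) (bas (map (fC n 1) w)) = bas (map (fD n r m) w)"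
proof (induction "m - r" arbitrary: m)
  case 0
  then have m: "m = r" by simp
  have mm: "map (fC n 1) w = map (fD n r m) w"
    by (intro map_cong refl) (use m in \<open>auto simp: fC_def fD_def dest: rng\<close>)
  show ?case unfolding mm using m by simp
next
  case (Suc d)
  obtain m' where m': "m = Suc m'" "r \<le> m'" using Suc by (cases m) auto
  have e: "rev [r+1..<m+1] = m # rev [r+1..<m'+1]" using m' by simp
  have IH: "word_op n (map (\<lambda>k. GF (int k)) (rev [r+1..<m'+1])) (bas (map (fC n 1) w)) = bas (map (fD n r m') w)"
    using Suc m' by simp
  have rm: "rs n (int m) = int m" using m' Suc by (intro rs_id) auto
  have rm1: "rs n (int m + 1) = int m + 1" using m' Suc by (intro rs_id) auto
  have "Ft n (int m) (map (fD n r m') w) = bas (map (\<lambda>t. if rs n t = int r then fD n r m' t + 1 else fD n r m' t) w)"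
  proof (rule Fmap[OF g])
    show "\<forall>t\<in>set w. (rs n (fD n r m' t) = rs n (int m)) = (rs n t = int r)"
    proof
      fix t assume t: "t \<in> set w"
      show "(rs n (fD n r m' t) = rs n (int m)) = (rs n t = int r)"
      proof (cases "rs n t = int r")
        case True
        then have "rs n (t + 1 + int (m' - r)) = rs n (int r + 1 + int (m' - r))" by (rule rs_L2)
        also have "int r + 1 + int (m' - r) = int m" using m' by simp
        finally show ?thesis using True rm by (simp add: fD_def)
      next
        case False
        then show ?thesis using rng[OF t] rm m' nr by (auto simp: fD_def rs_plus1[OF n0])
      qed
    qed
    show "\<forall>t\<in>set w. rs n (fD n r m' t) \<noteq> rs n (int m + 1)"
    proof
      fix t assume t: "t \<in> set w"
      show "rs n (fD n r m' t) \<noteq> rs n (int m + 1)"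
      proof (cases "rs n t = int r")
        case True
        then have "rs n (t + 1 + int (m' - r)) = rs n (int r + 1 + int (m' - r))" by (rule rs_L2)
        also have "int r + 1 + int (m' - r) = int m" using m' by simp
        finally show ?thesis using True rm rm1 by (simp add: fD_def)
      next
        case False
        then show ?thesis using rng[OF t] rm1 m' nr by (auto simp: fD_def rs_plus1[OF n0])
      qed
    qed
  qed (use r1 in auto)
  moreover have "map (\<lambda>t. if rs n t = int r then fD n r m' t + 1 else fD n r m' t) w = map (fD n r m) w"
    using m' by (auto simp: fD_def)
  ultimately show ?case unfolding e using IH by simp
qed

lemma stepFn: "Ft n (int n) (map (fD n r (n - 1)) w) = bas (map (sig n r) w)"
proof -
  have rn: "rs n (int n) = int n" using nr by (intro rs_id) auto
  have "Ft n (int n) (map (fD n r (n - 1)) w) = bas (map (\<lambda>t. if rs n t = int r then fD n r (n - 1) t + 1 else fD n r (n - 1) t) w)"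
  proof (rule Fmap[OF g])
    show "\<forall>t\<in>set w. (rs n (fD n r (n - 1) t) = rs n (int n)) = (rs n t = int r)"
    proof
      fix t assume t: "t \<in> set w"
      show "(rs n (fD n r (n - 1) t) = rs n (int n)) = (rs n t = int r)"
      proof (cases "rs n t = int r")
        case True
        then have "rs n (t + 1 + int (n - 1 - r)) = rs n (int r + 1 + int (n - 1 - r))" by (rule rs_L2)
        also have "int r + 1 + int (n - 1 - r) = int n" using nr by simp
        finally show ?thesis using True rn by (simp add: fD_def)
      next
        case False
        then show ?thesis using rng[OF t] rn nr by (auto simp: fD_def rs_plus1[OF n0])
      qed
    qed
    show "\<forall>t\<in>set w. rs n (fD n r (n - 1) t) \<noteq> rs n (int n + 1)"
    proof
      fix t assume t: "t \<in> set w"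
      show "rs n (fD n r (n - 1) t) \<noteq> rs n (int n + 1)"
      proof (cases "rs n t = int r")
        case True
        then have "rs n (t + 1 + int (n - 1 - r)) = rs n (int r + 1 + int (n - 1 - r))" by (rule rs_L2)
        also have "int r + 1 + int (n - 1 - r) = int n" using nr by simp
        finally show ?thesis using True rn nr r1 by (simp add: fD_def rs_n1)
      next
        case False
        then show ?thesis using rng[OF t] nr by (auto simp: fD_def rs_plus1[OF n0] rs_n1)
      qed
    qed
  qed (use r1 in auto)
  moreover have "map (\<lambda>t. if rs n t = int r then fD n r (n - 1) t + 1 else fD n r (n - 1) t) w = map (sig n r) w"
    using nr by (auto simp: fD_def sig_def)
  ultimately show ?thesis by simp
qed

lemma Trhoinv_bas: "Trhoinv n r (bas w) = bas (map (sig n r) w)"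
proof -
  have e: "rev [r+1..<n+1] = n # rev [r+1..<(n - 1)+1]" using nr by (simp add: upt_Suc_append)
  have "Trhoinv n r (bas w) = gen_op n (GF (int n)) (word_op n (map (\<lambda>k. GF (int k)) (rev [r+1..<(n - 1)+1]))
      (word_op n (map (\<lambda>k. GF (int k)) [1..<r+1]) (bas w)))"
    unfolding Trhoinv_def word_op_append e by simp
  also have "\<dots> = Ft n (int n) (map (fD n r (n - 1)) w)"
    using chainC[of 1] chainD[of "n - 1"] r1 nr by simp
  finally show ?thesis using stepFn by simp
qed

lemma rho_rs: "t \<in> set w \<Longrightarrow> rs n (rho n r t) = (if rs n t = 1 then int r else rs n t - 1)"
proof -
  assume t: "t \<in> set w"
  show ?thesis
  proof (cases "rs n t = 1")
    case True
    have rr: "rs n (int r) = int r" using r1 nr by (intro rs_id) auto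
    then show ?thesis using rs_L1[OF True, of r] nr True by (simp add: rho_def)
  next
    case False
    then show ?thesis using rng[OF t] by (simp add: rho_def rs_minus1[OF n0])
  qed
qed

lemma sig_rs: "t \<in> set w \<Longrightarrow> rs n (sig n r t) = (if rs n t = int r then 1 else rs n t + 1)"
proof -
  assume t: "t \<in> set w"
  show ?thesis
  proof (cases "rs n t = int r")
    case True
    then have "rs n (t + 1 + int (n - r)) = rs n (int r + 1 + int (n - r))" by (rule rs_L2)
    also have "int r + 1 + int (n - r) = int n + 1" using nr by simp
    finally show ?thesis using True by (simp add: sig_def rs_n1)
  next
    case False
    then show ?thesis using rng[OF t] nr by (simp add: sig_def rs_plus1[OF n0])
  qed
qed

lemma good_rho: "good n r (map (rho n r) w)"
  by (rule good_map[OF g nr, where \<phi>="\<lambda>c. if c = 1 then int r else c - 1"])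
     (use rho_rs r1 in \<open>auto simp: inj_on_def\<close>)

lemma good_sig: "good n r (map (sig n r) w)"
  by (rule good_map[OF g nr, where \<phi>="\<lambda>c. if c = int r then 1 else c + 1"])
     (use sig_rs r1 in \<open>auto simp: inj_on_def\<close>)

lemma rho_sig: "map (rho n r) (map (sig n r) w) = w"
proof -
  have "rho n r (sig n r t) = t" if t: "t \<in> set w" for t
    using sig_rs[OF t] rng[OF t] nr unfolding rho_def by (auto simp: sig_def)
  then show ?thesis by (simp add: map_idI)
qed

lemma sig_rho: "map (sig n r) (map (rho n r) w) = w"
proof -
  have "sig n r (rho n r t) = t" if t: "t \<in> set w" for t
    using rho_rs[OF t] rng[OF t] nr r1 unfolding sig_def by (auto simp: rho_def)
  then show ?thesis by (simp add: map_idI)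
qed

end


lemma Ts_gen:
  fixes i :: nat
  assumes u1: "uniq n (int i) w" "uniq n (int i + 1) w" and i: "1 \<le> i" "i + 1 < n"
  shows "Ts n i (bas w) = (\<lambda>u. (if befp n (int i) (int i + 1) w then 0 else vv^2 - 1) * bas w u
           + vv * bas (map (sw n (int i)) w) u)"
proof -
  have ne: "int i \<noteq> int i + 1" by simp
  from split2[OF u1 ne] show ?thesis
  proof (elim disjE exE conjE)
    fix xs a ys b zs
    assume h: "w = xs @ a # ys @ b # zs" "rs n a = int i" "rs n b = int i + 1"
      "free n (int i) xs" "free n (int i) ys" "free n (int i) zs"
      "free n (int i + 1) xs" "free n (int i + 1) ys" "free n (int i + 1) zs"
    have "befp n (int i) (int i + 1) w" unfolding h(1) by (rule befpA) (use h in auto)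
    moreover have "map (sw n (int i)) w = xs @ (a + 1) # ys @ (b - 1) # zs"
      using h by (simp add: map_sw_free sw_def)
    ultimately show ?thesis unfolding h(1) using TsA[OF i(1,2) h(2-)] by simp
  next
    fix xs a ys b zs
    assume h: "w = xs @ b # ys @ a # zs" "rs n a = int i" "rs n b = int i + 1"
      "free n (int i) xs" "free n (int i) ys" "free n (int i) zs"
      "free n (int i + 1) xs" "free n (int i + 1) ys" "free n (int i + 1) zs"
    have "\<not> befp n (int i) (int i + 1) w" unfolding h(1) by (rule befpB) (use h in auto)
    moreover have "map (sw n (int i)) w = xs @ (b - 1) # ys @ (a + 1) # zs"
      using h by (simp add: map_sw_free sw_def)
    ultimately show ?thesis unfolding h(1) using TsB[OF i(1,2) h(2-)] by simp
  qed
qed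

lemma filter_free: "free n c xs \<Longrightarrow> filter (\<lambda>t. rs n t = c) xs = []"
  unfolding free_def by (simp add: filter_empty_conv)

lemma befp_Nil[simp]: "\<not> befp n c d []" unfolding befp_def by simp
lemma befp_Cons[simp]: "befp n c d (x # xs) \<longleftrightarrow> rs n x \<noteq> d \<and> (rs n x = c \<or> befp n c d xs)"
  unfolding befp_def by (cases "rs n x = d") auto
lemma befp_app_free: "free n c xs \<Longrightarrow> free n d xs \<Longrightarrow> befp n c d (xs @ ys) = befp n c d ys"
  by (induction xs) auto

lemma befp_map: "\<forall>t\<in>set w. (rs n (f t) = c' \<longleftrightarrow> rs n t = c) \<and> (rs n (f t) = d' \<longleftrightarrow> rs n t = d) \<Longrightarrow>
   befp n c' d' (map f w) = befp n c d w"
  by (induction w) auto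

lemma befp_swap:
  assumes "uniq n c w" "uniq n d w" "c \<noteq> d"
  shows "befp n d c w = (\<not> befp n c d w)"
  using split2[OF assms]
proof (elim disjE exE conjE)
  fix xs a ys b zs
  assume h: "w = xs @ a # ys @ b # zs" "rs n a = c" "rs n b = d"
      "free n c xs" "free n c ys" "free n c zs" "free n d xs" "free n d ys" "free n d zs"
  have "befp n c d w" unfolding h(1) by (rule befpA) (use h assms in auto)
  moreover have "\<not> befp n d c w" unfolding h(1) by (rule befpB) (use h in auto)
  ultimately show ?thesis by simp
next
  fix xs a ys b zs
  assume h: "w = xs @ b # ys @ a # zs" "rs n a = c" "rs n b = d"
      "free n c xs" "free n c ys" "free n c zs" "free n d xs" "free n d ys" "free n d zs"
  have "befp n d c w" unfolding h(1) by (rule befpA) (use h assms in auto)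
  moreover have "\<not> befp n c d w" unfolding h(1) by (rule befpB) (use h in auto)
  ultimately show ?thesis by simp
qed

lemma rs_sw: "1 \<le> i \<Longrightarrow> i + 1 < int n \<Longrightarrow>
  rs n (sw n i t) = (if rs n t = i then i + 1 else if rs n t = i + 1 then i else rs n t)"
proof -
  assume i: "1 \<le> i" "i + 1 < int n"
  then have n: "n > 0" by simp
  show ?thesis unfolding sw_def using i by (auto simp: rs_plus1[OF n] rs_minus1[OF n])
qed

lemma sw_sw: "1 \<le> i \<Longrightarrow> i + 1 < int n \<Longrightarrow> sw n i (sw n i t) = t"
proof -
  assume i: "1 \<le> i" "i + 1 < int n"
  then have n: "n > 0" by simp
  show ?thesis using rs_sw[OF i, of t] unfolding sw_def by auto
qed

lemma sw_comm: "1 \<le> i \<Longrightarrow> i + 1 < int n \<Longrightarrow> 1 \<le> j \<Longrightarrow> j + 1 < int n \<Longrightarrow> \<bar>i - j\<bar> > 1 \<Longrightarrow>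
   sw n i (sw n j t) = sw n j (sw n i t)"
proof -
  assume i: "1 \<le> i" "i + 1 < int n" and j: "1 \<le> j" "j + 1 < int n" and ij: "\<bar>i - j\<bar> > 1"
  show ?thesis using rs_sw[OF i, of t] rs_sw[OF j, of t] ij unfolding sw_def by auto
qed

lemma good_sw:
  fixes i :: nat
  assumes g: "good n r w" and i: "1 \<le> i" "i < r" and nr: "r < n"
  shows "good n r (map (sw n (int i)) w)"
proof -
  have i': "1 \<le> int i" "int i + 1 < int n" using i nr by auto
  show ?thesis
    by (rule good_map[OF g nr, where \<phi>="\<lambda>c. if c = int i then int i + 1 else if c = int i + 1 then int i else c"])
       (use rs_sw[OF i'] i in \<open>auto simp: inj_on_def\<close>)
qed

lemma count3: "a \<noteq> b \<Longrightarrow> a \<noteq> c \<Longrightarrow> b \<noteq> c \<Longrightarrow>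
  length (filter (\<lambda>t. rs n t \<in> {a, b, c}) w) =
  length (filter (\<lambda>t. rs n t = a) w) + length (filter (\<lambda>t. rs n t = b) w) + length (filter (\<lambda>t. rs n t = c) w)"
  by (induction w) auto

lemma split3:
  assumes u: "uniq n a w" "uniq n b w" "uniq n c w" and d: "a \<noteq> b" "a \<noteq> c" "b \<noteq> c"
  shows "\<exists>xs x ys y zs z us. w = xs @ x # ys @ y # zs @ z # us \<and>
     (\<forall>e\<in>{a,b,c}. free n e xs \<and> free n e ys \<and> free n e zs \<and> free n e us) \<and>
     rs n x \<in> {a,b,c} \<and> rs n y \<in> {a,b,c} \<and> rs n z \<in> {a,b,c} \<and>
     rs n x \<noteq> rs n y \<and> rs n x \<noteq> rs n z \<and> rs n y \<noteq> rs n z"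
proof -
  let ?P = "\<lambda>t. rs n t \<in> {a, b, c}"
  have "length (filter ?P w) = 3" using count3[OF d, of n w] u unfolding uniq_def by simp
  then obtain x y z where f: "filter ?P w = [x, y, z]"
    by (auto simp: numeral_3_eq_3 length_Suc_conv)
  from filter_eq_ConsD[OF f] obtain xs vs1 where
    1: "w = xs @ x # vs1" "\<forall>u\<in>set xs. \<not> ?P u" "?P x" "[y, z] = filter ?P vs1" by blast
  from filter_eq_ConsD[OF 1(4)[symmetric]] obtain ys vs2 where
    2: "vs1 = ys @ y # vs2" "\<forall>u\<in>set ys. \<not> ?P u" "?P y" "[z] = filter ?P vs2" by blast
  from filter_eq_ConsD[OF 2(4)[symmetric]] obtain zs us where
    3: "vs2 = zs @ z # us" "\<forall>u\<in>set zs. \<not> ?P u" "?P z" "[] = filter ?P us" by blast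
  have "filter ?P us = []" using 3(4) by simp
  then have 4: "\<forall>u\<in>set us. \<not> ?P u" unfolding filter_empty_conv .
  have w: "w = xs @ x # ys @ y # zs @ z # us" using 1(1) 2(1) 3(1) by simp
  have un: "length (filter (\<lambda>t. rs n t = e) w) = 1" if "e \<in> {a, b, c}" for e
    using u that unfolding uniq_def by auto
  have "rs n x \<noteq> rs n y"
  proof
    assume e: "rs n x = rs n y"
    have "length (filter (\<lambda>t. rs n t = rs n x) w) \<ge> 2" unfolding w using e by simp
    then show False using un[of "rs n x"] 1(3) by simp
  qed
  moreover have "rs n x \<noteq> rs n z"
  proof
    assume e: "rs n x = rs n z"
    have "length (filter (\<lambda>t. rs n t = rs n x) w) \<ge> 2" unfolding w using e by simp
    then show False using un[of "rs n x"] 1(3) by simp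
  qed
  moreover have "rs n y \<noteq> rs n z"
  proof
    assume e: "rs n y = rs n z"
    have "length (filter (\<lambda>t. rs n t = rs n y) w) \<ge> 2" unfolding w using e by simp
    then show False using un[of "rs n y"] 2(3) by simp
  qed
  moreover have "\<forall>e\<in>{a,b,c}. free n e xs \<and> free n e ys \<and> free n e zs \<and> free n e us"
    using 1(2) 2(2) 3(2) 4 unfolding free_def by auto
  ultimately show ?thesis using w 1(3) 2(3) 3(3) by blast
qed


lemma Ts_lin: "fs f \<Longrightarrow> fs g \<Longrightarrow> Ts n i (\<lambda>u. a * f u + b * g u) = (\<lambda>u. a * Ts n i f u + b * Ts n i g u)"
  by (rule lo_comb[OF lo_Ts])

lemma Ts_scale: "fs f \<Longrightarrow> Ts n i (\<lambda>u. a * f u) = (\<lambda>u. a * Ts n i f u)"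
  by (rule lo_scale[OF lo_Ts])

lemma Ts_add: "fs f \<Longrightarrow> fs g \<Longrightarrow> Ts n i (\<lambda>u. f u + g u) = (\<lambda>u. Ts n i f u + Ts n i g u)"
  using lo_comb[OF lo_Ts[of n i], of f g 1 1] by simp

lemma Ts_zero: "Ts n i (\<lambda>u. 0) = (\<lambda>u. 0)"
  by (rule lo_zero[OF lo_Ts])

lemma fs_add: "fs f \<Longrightarrow> fs g \<Longrightarrow> fs (\<lambda>u. f u + g u)"
  using fs_comb[of f g 1 1] by simp

lemma rs_addL: "1 \<le> rs n t + c \<Longrightarrow> rs n t + c \<le> int n \<Longrightarrow> rs n (c + t) = rs n t + c"
  using rs_plus[of n t c] rs_id[of "rs n t + c" n] by (simp add: add.commute)
lemma rs_addR: "1 \<le> rs n t + c \<Longrightarrow> rs n t + c \<le> int n \<Longrightarrow> rs n (t + c) = rs n t + c"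
  using rs_plus[of n t c] rs_id[of "rs n t + c" n] by simp
lemma rs_sub: "1 \<le> rs n t - c \<Longrightarrow> rs n t - c \<le> int n \<Longrightarrow> rs n (t - c) = rs n t - c"
  using rs_plus[of n t "- c"] rs_id[of "rs n t - c" n] by simp

lemmas Ts_rules = Ts_lin Ts_scale Ts_add Ts_zero fs_add

lemma braid_core:
  fixes i j :: nat
  assumes j: "int j = int i + 1"
    and rg: "1 \<le> int i" "int i + 2 < int n"
    and fr: "free n (int i) xs" "free n (int i) ys" "free n (int i) zs" "free n (int i) us"
      "free n (int i + 1) xs" "free n (int i + 1) ys" "free n (int i + 1) zs" "free n (int i + 1) us"
      "free n (int i + 2) xs" "free n (int i + 2) ys" "free n (int i + 2) zs" "free n (int i + 2) us"
    and cs: "(rs n x = int i \<and> rs n y = int i + 1 \<and> rs n z = int i + 2) \<or> (rs n x = int i \<and> rs n y = int i + 2 \<and> rs n z = int i + 1) \<or>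
      (rs n x = int i + 1 \<and> rs n y = int i \<and> rs n z = int i + 2) \<or> (rs n x = int i + 1 \<and> rs n y = int i + 2 \<and> rs n z = int i) \<or>
      (rs n x = int i + 2 \<and> rs n y = int i \<and> rs n z = int i + 1) \<or> (rs n x = int i + 2 \<and> rs n y = int i + 1 \<and> rs n z = int i)"
  shows "Ts n i (Ts n j (Ts n i (bas (xs @ x # ys @ y # zs @ z # us)))) =
         Ts n j (Ts n i (Ts n j (bas (xs @ x # ys @ y # zs @ z # us))))"
proof -
  have jj: "1 \<le> j" "j + 1 < n" "1 \<le> i" "i + 1 < n" using j rg by auto
  have j2: "int j + 1 = int i + 2" using j by simp
  have Tj: "uniq n (int i + 1) L \<Longrightarrow> uniq n (int i + 2) L \<Longrightarrow> Ts n j (bas L) =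
     (\<lambda>u. (if befp n (int i + 1) (int i + 2) L then 0 else vv\<^sup>2 - 1) * bas L u + vv * bas (map (sw n (int i + 1)) L) u)" for L
    using Ts_gen[OF _ _ jj(1,2), of L] unfolding j2 unfolding j .
  have sw1: "sw n (int i + 1) t = (if rs n t = int i + 1 then t + 1 else if rs n t = int i + 2 then t - 1 else t)" for t
    unfolding sw_def by (simp add: add.assoc)
  have sw0: "sw n (int i) t = (if rs n t = int i then t + 1 else if rs n t = int i + 1 then t - 1 else t)" for t
    unfolding sw_def by simp
  have msw1: "free n (int i + 1) xs \<Longrightarrow> free n (int i + 2) xs \<Longrightarrow> map (sw n (int i + 1)) xs = xs" for xs
    using map_sw_free[of n "int i + 1" xs] by (simp add: add.assoc)
  note Tg = Tj Ts_gen[OF _ _ jj(3,4)]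
  from cs show ?thesis
    using fr j rg
    apply (elim disjE conjE)
    apply (simp_all add: Tg Ts_rules uniq_def filter_free befp_app_free msw1 map_sw_free sw0 sw1
           rs_addL rs_addR rs_sub)
    apply (simp_all add: fun_eq_iff algebra_simps)
    done
qed

lemma quad_core:
  fixes i :: nat
  assumes rg: "1 \<le> int i" "int i + 1 < int n"
    and fr: "free n (int i) xs" "free n (int i) ys" "free n (int i) zs"
      "free n (int i + 1) xs" "free n (int i + 1) ys" "free n (int i + 1) zs"
    and cs: "(rs n x = int i \<and> rs n y = int i + 1) \<or> (rs n x = int i + 1 \<and> rs n y = int i)"
  shows "Ts n i (Ts n i (bas (xs @ x # ys @ y # zs))) =
         (\<lambda>u. (vv^2 - 1) * Ts n i (bas (xs @ x # ys @ y # zs)) u + vv^2 * bas (xs @ x # ys @ y # zs) u)"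
proof -
  have jj: "1 \<le> i" "i + 1 < n" using rg by auto
  note Tg = Ts_gen[OF _ _ jj(1,2)]
  from cs show ?thesis
    using fr rg
    apply (elim disjE conjE)
    apply (simp_all add: Tg Ts_rules uniq_def filter_free befp_app_free map_sw_free sw_def
           rs_addL rs_addR rs_sub)
    apply (simp_all add: fun_eq_iff algebra_simps power2_eq_square)
    done
qed

lemma free_of: "\<forall>e\<in>{a,b,c}. free n e xs \<and> free n e ys \<and> free n e zs \<and> free n e us \<Longrightarrow>
  free n a xs \<and> free n a ys \<and> free n a zs \<and> free n a us \<and>
  free n b xs \<and> free n b ys \<and> free n b zs \<and> free n b us \<and>
  free n c xs \<and> free n c ys \<and> free n c zs \<and> free n c us"
  by auto

lemma braid_bas:
  fixes i :: nat
  assumes g: "good n r w" and i: "1 \<le> i" "i + 2 \<le> r" and nr: "r < n"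
  shows "Ts n i (Ts n (i + 1) (Ts n i (bas w))) = Ts n (i + 1) (Ts n i (Ts n (i + 1) (bas w)))"
proof -
  have u: "uniq n (int i) w" "uniq n (int i + 1) w" "uniq n (int i + 2) w"
    using g i unfolding good_def by auto
  have d: "int i \<noteq> int i + 1" "int i \<noteq> int i + 2" "int i + 1 \<noteq> int i + 2" by auto
  obtain xs x ys y zs z us where s: "w = xs @ x # ys @ y # zs @ z # us"
     "\<forall>e\<in>{int i, int i + 1, int i + 2}. free n e xs \<and> free n e ys \<and> free n e zs \<and> free n e us"
     "rs n x \<in> {int i, int i + 1, int i + 2}" "rs n y \<in> {int i, int i + 1, int i + 2}"
     "rs n z \<in> {int i, int i + 1, int i + 2}"
     "rs n x \<noteq> rs n y" "rs n x \<noteq> rs n z" "rs n y \<noteq> rs n z"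
    using split3[OF u d] by blast
  have cs: "(rs n x = int i \<and> rs n y = int i + 1 \<and> rs n z = int i + 2) \<or> (rs n x = int i \<and> rs n y = int i + 2 \<and> rs n z = int i + 1) \<or>
      (rs n x = int i + 1 \<and> rs n y = int i \<and> rs n z = int i + 2) \<or> (rs n x = int i + 1 \<and> rs n y = int i + 2 \<and> rs n z = int i) \<or>
      (rs n x = int i + 2 \<and> rs n y = int i \<and> rs n z = int i + 1) \<or> (rs n x = int i + 2 \<and> rs n y = int i + 1 \<and> rs n z = int i)"
    using s(3-8) by auto
  have j: "int (i + 1) = int i + 1" by simp
  have rg: "1 \<le> int i" "int i + 2 < int n" using i nr by auto
  show ?thesis unfolding s(1)
    by (rule braid_core[OF j rg _ _ _ _ _ _ _ _ _ _ _ _ cs]) (use free_of[OF s(2)] in auto)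
qed

lemma quad_bas:
  fixes i :: nat
  assumes g: "good n r w" and i: "1 \<le> i" "i < r" and nr: "r < n"
  shows "Ts n i (Ts n i (bas w)) = (\<lambda>u. (vv^2 - 1) * Ts n i (bas w) u + vv^2 * bas w u)"
proof -
  have u: "uniq n (int i) w" "uniq n (int i + 1) w" using g i unfolding good_def by auto
  have ne: "int i \<noteq> int i + 1" by simp
  have rg: "1 \<le> int i" "int i + 1 < int n" using i nr by auto
  from split2[OF u ne] show ?thesis
  proof (elim disjE exE conjE)
    fix xs a ys b zs
    assume h: "w = xs @ a # ys @ b # zs" "rs n a = int i" "rs n b = int i + 1"
      "free n (int i) xs" "free n (int i) ys" "free n (int i) zs"
      "free n (int i + 1) xs" "free n (int i + 1) ys" "free n (int i + 1) zs"
    show ?thesis unfolding h(1) by (rule quad_core[OF rg h(4-9)]) (use h in auto)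
  next
    fix xs a ys b zs
    assume h: "w = xs @ b # ys @ a # zs" "rs n a = int i" "rs n b = int i + 1"
      "free n (int i) xs" "free n (int i) ys" "free n (int i) zs"
      "free n (int i + 1) xs" "free n (int i + 1) ys" "free n (int i + 1) zs"
    show ?thesis unfolding h(1) by (rule quad_core[OF rg h(4-9)]) (use h in auto)
  qed
qed

lemma comm_bas:
  fixes i j :: nat
  assumes g: "good n r w" and i: "1 \<le> i" "i < r" and j: "1 \<le> j" "j < r" and nr: "r < n"
    and ij: "\<bar>int i - int j\<bar> > 1"
  shows "Ts n i (Ts n j (bas w)) = Ts n j (Ts n i (bas w))"
proof -
  have ri: "1 \<le> int i" "int i + 1 < int n" and rj: "1 \<le> int j" "int j + 1 < int n" using i j nr by auto
  have gi: "good n r (map (sw n (int i)) w)" by (rule good_sw[OF g i nr])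
  have gj: "good n r (map (sw n (int j)) w)" by (rule good_sw[OF g j nr])
  have bi: "befp n (int i) (int i + 1) (map (sw n (int j)) w) = befp n (int i) (int i + 1) w"
    by (rule befp_map) (use rs_sw[OF rj] ij in auto)
  have bj: "befp n (int j) (int j + 1) (map (sw n (int i)) w) = befp n (int j) (int j + 1) w"
    by (rule befp_map) (use rs_sw[OF ri] ij in auto)
  have cm: "map (sw n (int i) \<circ> sw n (int j)) w = map (sw n (int j) \<circ> sw n (int i)) w"
    using sw_comm[OF ri rj] ij by simp
  show ?thesis
    unfolding Ts_good[OF g i nr] Ts_good[OF g j nr] Ts_good[OF gi j nr] Ts_good[OF gj i nr]
    apply (simp add: Ts_rules Ts_good[OF g i nr] Ts_good[OF g j nr] Ts_good[OF gi j nr] Ts_good[OF gj i nr] bi bj cm)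
    by (simp add: fun_eq_iff algebra_simps)
qed


lemma Trho_lin: "fs f \<Longrightarrow> fs g \<Longrightarrow> Trho n r (\<lambda>u. a * f u + b * g u) = (\<lambda>u. a * Trho n r f u + b * Trho n r g u)"
  by (rule lo_comb[OF lo_Trho])

context
  fixes n r :: nat
  assumes r1: "1 \<le> r" and nr: "r < n"
begin

lemma n0': "n > 0" using nr by simp

lemma sig_rs_pt: "1 \<le> rs n t \<Longrightarrow> rs n t \<le> int r \<Longrightarrow> rs n (sig n r t) = (if rs n t = int r then 1 else rs n t + 1)"
proof -
  assume t: "1 \<le> rs n t" "rs n t \<le> int r"
  show ?thesis
  proof (cases "rs n t = int r")
    case True
    then have "rs n (t + 1 + int (n - r)) = rs n (int r + 1 + int (n - r))" by (rule rs_L2)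
    also have "int r + 1 + int (n - r) = int n + 1" using nr by simp
    finally show ?thesis using True by (simp add: sig_def rs_n1)
  next
    case False
    then show ?thesis using t nr by (simp add: sig_def rs_plus1[OF n0'])
  qed
qed

lemma sig_rng_pt: "1 \<le> rs n t \<Longrightarrow> rs n t \<le> int r \<Longrightarrow> 1 \<le> rs n (sig n r t) \<and> rs n (sig n r t) \<le> int r"
  using sig_rs_pt r1 by auto

lemma rho_sig_pt: "1 \<le> rs n t \<Longrightarrow> rs n t \<le> int r \<Longrightarrow> rho n r (sig n r t) = t"
  using sig_rs_pt[of t] nr unfolding rho_def by (auto simp: sig_def)

lemma sigpow_rng: "1 \<le> rs n t \<Longrightarrow> rs n t \<le> int r \<Longrightarrow> 1 \<le> rs n ((sig n r ^^ k) t) \<and> rs n ((sig n r ^^ k) t) \<le> int r"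
  by (induction k) (auto intro!: sig_rng_pt)

lemma rhosig_pow: "1 \<le> rs n t \<Longrightarrow> rs n t \<le> int r \<Longrightarrow> (rho n r ^^ k) ((sig n r ^^ k) t) = t"
proof (induction k)
  case 0
  then show ?case by simp
next
  case (Suc k)
  have ea: "(rho n r ^^ Suc k) x = (rho n r ^^ k) (rho n r x)" for x
    by (simp only: funpow_Suc_right comp_def)
  have eb: "(sig n r ^^ Suc k) t = sig n r ((sig n r ^^ k) t)" by simp
  have "(rho n r ^^ Suc k) ((sig n r ^^ Suc k) t) = (rho n r ^^ k) (rho n r (sig n r ((sig n r ^^ k) t)))"
    unfolding ea eb ..
  also have "rho n r (sig n r ((sig n r ^^ k) t)) = (sig n r ^^ k) t"
    using sigpow_rng[OF Suc.prems, of k] rho_sig_pt by blast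
  finally show ?case using Suc by simp
qed

lemma sigpow_lin: "1 \<le> rs n t \<Longrightarrow> rs n t + int k \<le> int r \<Longrightarrow> (sig n r ^^ k) t = t + int k"
proof (induction k)
  case 0
  then show ?case by simp
next
  case (Suc k)
  have e: "(sig n r ^^ k) t = t + int k" using Suc by simp
  have "rs n (t + int k) = rs n t + int k" using Suc nr by (intro rs_addR) auto
  then show ?case using e Suc by (simp add: sig_def)
qed

lemma sigpow_r: "1 \<le> rs n t \<Longrightarrow> rs n t \<le> int r \<Longrightarrow> (sig n r ^^ r) t = t + int n"
proof -
  assume t: "1 \<le> rs n t" "rs n t \<le> int r"
  define a where "a = nat (rs n t)"
  have a: "int a = rs n t" "1 \<le> a" "a \<le> r" using t unfolding a_def by auto
  have rr: "r = (a - 1) + (1 + (r - a))" using a by simp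
  have s1: "(sig n r ^^ (r - a)) t = t + int (r - a)" by (rule sigpow_lin) (use t a in auto)
  have rs1: "rs n (t + int (r - a)) = int r" using a t nr by (subst rs_addR) auto
  have s2: "sig n r (t + int (r - a)) = t + int (r - a) + 1 + int (n - r)" using rs1 by (simp add: sig_def)
  have rs2: "rs n (t + int (r - a) + 1 + int (n - r)) = 1"
    using sig_rs_pt[of "t + int (r - a)"] rs1 r1 s2 by simp
  have s3: "(sig n r ^^ (a - 1)) (t + int (r - a) + 1 + int (n - r)) = t + int (r - a) + 1 + int (n - r) + int (a - 1)"
    by (rule sigpow_lin) (use rs2 a in auto)
  have eq: "(a - 1) + (1 + (r - a)) = r" using a by simp
  have c0: "(sig n r ^^ ((a - 1) + (1 + (r - a)))) t = (sig n r ^^ (a - 1)) ((sig n r ^^ 1) ((sig n r ^^ (r - a)) t))"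
    by (simp only: funpow_add comp_def)
  have "(sig n r ^^ r) t = (sig n r ^^ (a - 1)) (sig n r ((sig n r ^^ (r - a)) t))"
    using c0 unfolding eq by simp
  also have "\<dots> = t + int (r - a) + 1 + int (n - r) + int (a - 1)" using s1 s2 s3 by simp
  also have "\<dots> = t + int n" using a nr by simp
  finally show ?thesis .
qed

lemma powinv_bas: "good n r w \<Longrightarrow> (Trhoinv n r ^^ k) (bas w) = bas (map (sig n r ^^ k) w) \<and> good n r (map (sig n r ^^ k) w)"
proof (induction k)
  case 0
  then show ?case by (simp add: map_idI)
next
  case (Suc k)
  then have IH: "(Trhoinv n r ^^ k) (bas w) = bas (map (sig n r ^^ k) w)" "good n r (map (sig n r ^^ k) w)" by auto
  have "(Trhoinv n r ^^ Suc k) (bas w) = Trhoinv n r (bas (map (sig n r ^^ k) w))" using IH by simp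
  also have "\<dots> = bas (map (sig n r) (map (sig n r ^^ k) w))" by (rule Trhoinv_bas[OF IH(2) r1 nr])
  finally show ?case using good_sig[OF IH(2) r1 nr] by (simp add: comp_def)
qed

lemma pow_bas: "good n r w \<Longrightarrow> (Trho n r ^^ k) (bas w) = bas (map (rho n r ^^ k) w) \<and> good n r (map (rho n r ^^ k) w)"
proof (induction k)
  case 0
  then show ?case by (simp add: map_idI)
next
  case (Suc k)
  then have IH: "(Trho n r ^^ k) (bas w) = bas (map (rho n r ^^ k) w)" "good n r (map (rho n r ^^ k) w)" by auto
  have "(Trho n r ^^ Suc k) (bas w) = Trho n r (bas (map (rho n r ^^ k) w))" using IH by simp
  also have "\<dots> = bas (map (rho n r) (map (rho n r ^^ k) w))" by (rule Trho_bas[OF IH(2) r1 nr])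
  finally show ?case using good_rho[OF IH(2) r1 nr] by (simp add: comp_def)
qed

end


lemma conj_pt:
  fixes i :: nat
  assumes r1: "1 \<le> r" and nr: "r < n" and i: "1 \<le> i" "i + 1 < r"
    and t: "1 \<le> rs n t" "rs n t \<le> int r"
  shows "rho n r (sw n (int i + 1) (sig n r t)) = sw n (int i) t"
proof -
  have n0: "n > 0" using nr by simp
  have sr: "rs n (sig n r t) = (if rs n t = int r then 1 else rs n t + 1)"
    by (rule sig_rs_pt[OF r1 nr t])
  consider "rs n t = int r" | "rs n t = int i" | "rs n t = int i + 1"
    | "rs n t \<noteq> int r" "rs n t \<noteq> int i" "rs n t \<noteq> int i + 1" by blast
  then show ?thesis
  proof cases
    case 1
    have s: "sw n (int i + 1) (sig n r t) = sig n r t" using sr 1 i unfolding sw_def by auto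
    show ?thesis unfolding s rho_sig_pt[OF r1 nr t, unfolded rho_def] using rho_sig_pt[OF r1 nr t] 1 i
      by (simp add: sw_def)
  next
    case 2
    have sg: "sig n r t = t + 1" using 2 i by (simp add: sig_def)
    have r2: "rs n (t + 1) = int i + 1" using sr sg 2 i by simp
    have s: "sw n (int i + 1) (t + 1) = t + 1 + 1" using r2 by (simp add: sw_def)
    have r3: "rs n (t + 1 + 1) = int i + 2" using r2 i nr by (subst rs_addR) auto
    show ?thesis unfolding sg s using r3 2 i by (simp add: rho_def sw_def)
  next
    case 3
    have sg: "sig n r t = t + 1" using 3 i by (simp add: sig_def)
    have r2: "rs n (t + 1) = int i + 2" using sr sg 3 i by simp
    have s: "sw n (int i + 1) (t + 1) = t" using r2 by (simp add: sw_def)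
    show ?thesis unfolding sg s using 3 i by (simp add: rho_def sw_def)
  next
    case 4
    have sg: "sig n r t = t + 1" using 4 by (simp add: sig_def)
    have r2: "rs n (t + 1) = rs n t + 1" using sr sg 4 by simp
    have s: "sw n (int i + 1) (t + 1) = t + 1" using r2 4 by (simp add: sw_def)
    show ?thesis unfolding sg s using r2 4 t by (simp add: rho_def sw_def)
  qed
qed

lemma conj_bas:
  fixes i :: nat
  assumes g: "good n r w" and r1: "1 \<le> r" and nr: "r < n" and i: "1 \<le> i" "i + 1 < r"
  shows "Trho n r (Ts n (i + 1) (Trhoinv n r (bas w))) = Ts n i (bas w)"
proof -
  have rng: "t \<in> set w \<Longrightarrow> 1 \<le> rs n t \<and> rs n t \<le> int r" for t using good_rng[OF g] nr by auto
  let ?w1 = "map (sig n r) w"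
  have g1: "good n r ?w1" by (rule good_sig[OF g r1 nr])
  have i1: "1 \<le> i + 1" "i + 1 < r" using i by auto
  let ?w2 = "map (sw n (int (i + 1))) ?w1"
  have g2: "good n r ?w2" by (rule good_sw[OF g1 i1 nr])
  have bf: "befp n (int (i + 1)) (int (i + 1) + 1) ?w1 = befp n (int i) (int i + 1) w"
  proof (rule befp_map, rule ballI)
    fix t assume t: "t \<in> set w"
    have e: "rs n (sig n r t) = (if rs n t = int r then 1 else rs n t + 1)"
      using sig_rs_pt[OF r1 nr] rng[OF t] by blast
    show "(rs n (sig n r t) = int (i + 1)) = (rs n t = int i) \<and>
        (rs n (sig n r t) = int (i + 1) + 1) = (rs n t = int i + 1)"
      unfolding e using i rng[OF t] by auto
  qed
  have m1: "map (rho n r) ?w1 = w" by (rule rho_sig[OF g r1 nr])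
  have m2: "map (rho n r) ?w2 = map (sw n (int i)) w"
    unfolding map_map of_nat_add of_nat_1
    by (rule map_cong[OF refl]) (auto simp: conj_pt[OF r1 nr i] dest: rng)
  have "Trho n r (Ts n (i + 1) (Trhoinv n r (bas w))) =
     Trho n r (\<lambda>u. (if befp n (int (i + 1)) (int (i + 1) + 1) ?w1 then 0 else vv^2 - 1) * bas ?w1 u + vv * bas ?w2 u)"
    unfolding Trhoinv_bas[OF g r1 nr] Ts_good[OF g1 i1 nr] ..
  also have "\<dots> = (\<lambda>u. (if befp n (int i) (int i + 1) w then 0 else vv^2 - 1) * bas w u + vv * bas (map (sw n (int i)) w) u)"
    unfolding Trho_lin[OF fs_bas fs_bas] Trho_bas[OF g1 r1 nr] Trho_bas[OF g2 r1 nr] m1 m2 bf ..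
  also have "\<dots> = Ts n i (bas w)" using Ts_good[OF g _ _ nr] i by simp
  finally show ?thesis .
qed

lemma powconj_bas:
  fixes i :: nat
  assumes g: "good n r w" and r1: "1 \<le> r" and nr: "r < n" and i: "1 \<le> i" "i < r"
  shows "(Trho n r ^^ r) (Ts n i ((Trhoinv n r ^^ r) (bas w))) = Ts n i (bas w)"
proof -
  have rng: "t \<in> set w \<Longrightarrow> 1 \<le> rs n t \<and> rs n t \<le> int r" for t using good_rng[OF g] nr by auto
  have i': "1 \<le> int i" "int i + 1 < int n" using i nr by auto
  let ?S = "sig n r ^^ r"
  let ?w1 = "map ?S w"
  have P1: "(Trhoinv n r ^^ r) (bas w) = bas ?w1" "good n r ?w1" using powinv_bas[OF r1 nr g] by auto
  have w1: "?w1 = map (\<lambda>t. t + int n) w" using sigpow_r[OF r1 nr] rng by simp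
  let ?v = "map (sw n (int i)) w"
  have gv: "good n r ?v" by (rule good_sw[OF g i nr])
  have rngv: "t \<in> set ?v \<Longrightarrow> 1 \<le> rs n t \<and> rs n t \<le> int r" for t using good_rng[OF gv] nr by auto
  have sw_n: "sw n (int i) (t + int n) = sw n (int i) t + int n" for t
    unfolding sw_def by (simp add: rs_addn)
  have m2: "map (sw n (int i)) ?w1 = map ?S ?v"
  proof -
    have "map (sw n (int i)) ?w1 = map (\<lambda>t. sw n (int i) t + int n) w" unfolding w1 by (simp add: sw_n)
    also have "\<dots> = map ?S ?v" using sigpow_r[OF r1 nr] rngv by simp
    finally show ?thesis .
  qed
  have Pv: "(Trhoinv n r ^^ r) (bas ?v) = bas (map ?S ?v)" "good n r (map ?S ?v)" using powinv_bas[OF r1 nr gv] by auto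
  have bf: "befp n (int i) (int i + 1) ?w1 = befp n (int i) (int i + 1) w"
    unfolding w1 by (rule befp_map) (simp add: rs_addn)
  have Rg: "(Trho n r ^^ r) (bas (map ?S u)) = bas u" if gu: "good n r u" for u
  proof -
    have rngu: "t \<in> set u \<Longrightarrow> 1 \<le> rs n t \<and> rs n t \<le> int r" for t using good_rng[OF gu] nr by auto
    have gS: "good n r (map ?S u)" using powinv_bas[OF r1 nr gu] by auto
    have "(Trho n r ^^ r) (bas (map ?S u)) = bas (map (rho n r ^^ r) (map ?S u))" using pow_bas[OF r1 nr gS] by auto
    also have "map (rho n r ^^ r) (map ?S u) = u" unfolding map_map
      by (rule map_idI) (auto simp: rhosig_pow[OF r1 nr] dest: rngu)
    finally show ?thesis .
  qed
  have R1: "(Trho n r ^^ r) (bas ?w1) = bas w" by (rule Rg[OF g])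
  have R2: "(Trho n r ^^ r) (bas (map ?S ?v)) = bas ?v" by (rule Rg[OF gv])
  have L: "lo (Trho n r ^^ r)" by (rule lo_pow[OF lo_Trho])
  have "(Trho n r ^^ r) (Ts n i ((Trhoinv n r ^^ r) (bas w))) =
     (Trho n r ^^ r) (\<lambda>u. (if befp n (int i) (int i + 1) ?w1 then 0 else vv^2 - 1) * bas ?w1 u + vv * bas (map ?S ?v) u)"
    unfolding P1(1) Ts_good[OF P1(2) i nr] m2 ..
  also have "\<dots> = (\<lambda>u. (if befp n (int i) (int i + 1) w then 0 else vv^2 - 1) * bas w u + vv * bas ?v u)"
    unfolding lo_comb[OF L fs_bas fs_bas] R1 R2 bf ..
  also have "\<dots> = Ts n i (bas w)" using Ts_good[OF g i nr] by simp
  finally show ?thesis .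
qed


lemma Vom_fs: "r < n \<Longrightarrow> Vomega n r f \<Longrightarrow> fs f"
  using Vomega_iff by blast

lemma Vom_good: "r < n \<Longrightarrow> Vomega n r f \<Longrightarrow> w \<in> supp f \<Longrightarrow> good n r w"
  using Vomega_iff unfolding supp_def by blast

lemma lift: "r < n \<Longrightarrow> lo P \<Longrightarrow> lo Q \<Longrightarrow> Vomega n r f \<Longrightarrow> (\<And>w. good n r w \<Longrightarrow> P (bas w) = Q (bas w)) \<Longrightarrow> P f = Q f"
  by (rule lo_ext) (auto dest: Vom_fs Vom_good)

lemma Vom_comb: assumes nr: "r < n" and f: "Vomega n r f" and g: "Vomega n r g"
  shows "Vomega n r (\<lambda>u. a * f u + b * g u)"
proof -
  have "fs f" "fs g" "\<forall>w. f w \<noteq> 0 \<longrightarrow> good n r w" "\<forall>w. g w \<noteq> 0 \<longrightarrow> good n r w"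
    using f g Vomega_iff[OF nr] by auto
  moreover have "a * f w + b * g w \<noteq> 0 \<Longrightarrow> f w \<noteq> 0 \<or> g w \<noteq> 0" for w by auto
  ultimately show ?thesis unfolding Vomega_iff[OF nr] by (auto intro: fs_comb)
qed

lemma Vom_zero: "r < n \<Longrightarrow> Vomega n r (\<lambda>u. 0)"
  using Vomega_iff[of r n "\<lambda>u. 0"] by simp

lemma Vom_bas: assumes nr: "r < n" and g: "good n r w" shows "Vomega n r (bas w)"
proof -
  have "fs (bas w)" by simp
  moreover have "\<forall>u. bas w u \<noteq> 0 \<longrightarrow> good n r u" using g by (simp add: bas_def)
  ultimately show ?thesis using Vomega_iff[OF nr] by blast
qed

lemma Vom_sum: assumes nr: "r < n" shows "finite S \<Longrightarrow> (\<forall>w\<in>S. Vomega n r (g w)) \<Longrightarrow> Vomega n r (\<lambda>u. \<Sum>w\<in>S. c w * g w u)"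
proof (induction S rule: finite_induct)
  case empty
  then show ?case using Vom_zero[OF nr] by simp
next
  case (insert x F)
  have "Vomega n r (\<lambda>u. c x * g x u + 1 * (\<Sum>w\<in>F. c w * g w u))"
    using insert by (intro Vom_comb[OF nr]) auto
  then show ?case using insert by simp
qed

lemma Vom_close: "r < n \<Longrightarrow> lo P \<Longrightarrow> Vomega n r f \<Longrightarrow> (\<And>w. good n r w \<Longrightarrow> Vomega n r (P (bas w))) \<Longrightarrow> Vomega n r (P f)"
proof -
  assume nr: "r < n" and P: "lo P" and f: "Vomega n r f" and b: "\<And>w. good n r w \<Longrightarrow> Vomega n r (P (bas w))"
  have fs: "fs f" using Vom_fs[OF nr f] .
  have fin: "finite (supp f)" using fs unfolding fs_def .
  have "P f = (\<lambda>u. \<Sum>w\<in>supp f. f w * P (bas w) u)"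
    by (subst f_expand[OF fs]) (rule lo_sum[OF P fin])
  moreover have "Vomega n r (\<lambda>u. \<Sum>w\<in>supp f. f w * P (bas w) u)"
    using Vom_sum[OF nr fin, of "\<lambda>w. P (bas w)"] b Vom_good[OF nr f] by blast
  ultimately show ?thesis by simp
qed

lemma Vom_Ts: assumes nr: "r < n" and g: "good n r w" and i: "1 \<le> i" "i < r"
  shows "Vomega n r (Ts n i (bas w))"
  unfolding Ts_good[OF g i nr] by (intro Vom_comb[OF nr] Vom_bas[OF nr] g good_sw[OF g i nr])

theorem proposition2p1p7:
  fixes n r :: nat
  assumes "r \<ge> 3" and "n > r"
  shows "(\<forall>f. Vomega n r f \<longrightarrow>
            Vomega n r (Trho n r f) \<and> Vomega n r (Trhoinv n r f) \<and>
            (\<forall>i\<in>{1..<r}. Vomega n r (Ts n i f)))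
       \<and> (\<forall>f. Vomega n r f \<longrightarrow> Trho n r (Trhoinv n r f) = f \<and> Trhoinv n r (Trho n r f) = f)
       \<and> (\<forall>i\<in>{1..<r}. \<forall>f. Vomega n r f \<longrightarrow>
            Ts n i (Ts n i f) = (\<lambda>u. (vv^2 - 1) * Ts n i f u + vv^2 * f u))
       \<and> (\<forall>i\<in>{1..<r}. \<forall>j\<in>{1..<r}. \<bar>int i - int j\<bar> > 1 \<longrightarrow> (\<forall>f. Vomega n r f \<longrightarrow>
            Ts n i (Ts n j f) = Ts n j (Ts n i f)))
       \<and> (\<forall>i\<in>{1..<r}. \<forall>j\<in>{1..<r}. \<bar>int i - int j\<bar> = 1 \<longrightarrow> (\<forall>f. Vomega n r f \<longrightarrow>
            Ts n i (Ts n j (Ts n i f)) = Ts n j (Ts n i (Ts n j f))))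
       \<and> (\<forall>i. 1 \<le> i \<and> i < r - 1 \<longrightarrow> (\<forall>f. Vomega n r f \<longrightarrow>
            Trho n r (Ts n (i + 1) (Trhoinv n r f)) = Ts n i f))
       \<and> (\<forall>i\<in>{1..<r}. \<forall>f. Vomega n r f \<longrightarrow>
            (Trho n r ^^ r) (Ts n i ((Trhoinv n r ^^ r) f)) = Ts n i f)"
proof -
  have nr: "r < n" using assms by simp
  have r1: "1 \<le> r" using assms by simp
  have lTT: "lo (\<lambda>f. Trho n r (Trhoinv n r f))" "lo (\<lambda>f. Trhoinv n r (Trho n r f))"
    by (rule lo_comp[OF lo_Trho lo_Trhoinv]) (rule lo_comp[OF lo_Trhoinv lo_Trho])
  have P1: "Vomega n r (Trho n r f) \<and> Vomega n r (Trhoinv n r f) \<and> (\<forall>i\<in>{1..<r}. Vomega n r (Ts n i f))"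
    if f: "Vomega n r f" for f
  proof (intro conjI ballI)
    show "Vomega n r (Trho n r f)"
      by (rule Vom_close[OF nr lo_Trho f]) (simp only: Trho_bas[OF _ r1 nr] Vom_bas[OF nr] good_rho[OF _ r1 nr])
    show "Vomega n r (Trhoinv n r f)"
      by (rule Vom_close[OF nr lo_Trhoinv f]) (simp only: Trhoinv_bas[OF _ r1 nr] Vom_bas[OF nr] good_sig[OF _ r1 nr])
    fix i assume "i \<in> {1..<r}"
    then show "Vomega n r (Ts n i f)"
      by (intro Vom_close[OF nr lo_Ts f] Vom_Ts[OF nr]) auto
  qed
  have P2: "Trho n r (Trhoinv n r f) = f \<and> Trhoinv n r (Trho n r f) = f" if f: "Vomega n r f" for f
  proof
    show "Trho n r (Trhoinv n r f) = f"
    proof (rule lift[OF nr lTT(1) lo_id f])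
      fix w assume g: "good n r w"
      show "Trho n r (Trhoinv n r (bas w)) = bas w"
        unfolding Trhoinv_bas[OF g r1 nr] Trho_bas[OF good_sig[OF g r1 nr] r1 nr] rho_sig[OF g r1 nr] ..
    qed
    show "Trhoinv n r (Trho n r f) = f"
    proof (rule lift[OF nr lTT(2) lo_id f])
      fix w assume g: "good n r w"
      show "Trhoinv n r (Trho n r (bas w)) = bas w"
        unfolding Trho_bas[OF g r1 nr] Trhoinv_bas[OF good_rho[OF g r1 nr] r1 nr] sig_rho[OF g r1 nr] ..
    qed
  qed
  have P3: "Ts n i (Ts n i f) = (\<lambda>u. (vv^2 - 1) * Ts n i f u + vv^2 * f u)"
    if i: "i \<in> {1..<r}" and f: "Vomega n r f" for i f
  proof -
    have l1: "lo (\<lambda>f. Ts n i (Ts n i f))" by (rule lo_comp[OF lo_Ts lo_Ts])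
    have l2: "lo (\<lambda>f u. (vv^2 - 1) * Ts n i f u + vv^2 * f u)" by (rule lo_lc[OF lo_Ts lo_id])
    show ?thesis
    proof (rule lift[OF nr l1 l2 f])
      fix w assume g: "good n r w"
      show "Ts n i (Ts n i (bas w)) = (\<lambda>u. (vv^2 - 1) * Ts n i (bas w) u + vv^2 * bas w u)"
        by (rule quad_bas[OF g _ _ nr]) (use i in auto)
    qed
  qed
  have P4: "Ts n i (Ts n j f) = Ts n j (Ts n i f)"
    if i: "i \<in> {1..<r}" and j: "j \<in> {1..<r}" and ij: "\<bar>int i - int j\<bar> > 1" and f: "Vomega n r f" for i j f
  proof -
    have l1: "lo (\<lambda>f. Ts n i (Ts n j f))" "lo (\<lambda>f. Ts n j (Ts n i f))" by (rule lo_comp[OF lo_Ts lo_Ts])+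
    show ?thesis
    proof (rule lift[OF nr l1 f])
      fix w assume g: "good n r w"
      show "Ts n i (Ts n j (bas w)) = Ts n j (Ts n i (bas w))"
        by (rule comm_bas[OF g _ _ _ _ nr ij]) (use i j in auto)
    qed
  qed
  have P5: "Ts n i (Ts n j (Ts n i f)) = Ts n j (Ts n i (Ts n j f))"
    if i: "i \<in> {1..<r}" and j: "j \<in> {1..<r}" and ij: "\<bar>int i - int j\<bar> = 1" and f: "Vomega n r f" for i j f
  proof -
    have l1: "lo (\<lambda>f. Ts n i (Ts n j (Ts n i f)))" "lo (\<lambda>f. Ts n j (Ts n i (Ts n j f)))"
      by (rule lo_comp[OF lo_Ts lo_comp[OF lo_Ts lo_Ts]])+
    consider "j = i + 1" | "i = j + 1" using ij by linarith
    then show ?thesis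
    proof cases
      case 1
      show ?thesis
      proof (rule lift[OF nr l1 f])
        fix w assume g: "good n r w"
        show "Ts n i (Ts n j (Ts n i (bas w))) = Ts n j (Ts n i (Ts n j (bas w)))"
          unfolding 1 by (rule braid_bas[OF g _ _ nr]) (use i j 1 in auto)
      qed
    next
      case 2
      show ?thesis
      proof (rule lift[OF nr l1 f])
        fix w assume g: "good n r w"
        show "Ts n i (Ts n j (Ts n i (bas w))) = Ts n j (Ts n i (Ts n j (bas w)))"
          unfolding 2 by (rule braid_bas[OF g _ _ nr, symmetric]) (use i j 2 in auto)
      qed
    qed
  qed
  have P6: "Trho n r (Ts n (i + 1) (Trhoinv n r f)) = Ts n i f"
    if i: "1 \<le> i" "i < r - 1" and f: "Vomega n r f" for i f
  proof -
    have l1: "lo (\<lambda>f. Trho n r (Ts n (i + 1) (Trhoinv n r f)))" by (rule lo_comp[OF lo_Trho lo_comp[OF lo_Ts lo_Trhoinv]])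
    show ?thesis
    proof (rule lift[OF nr l1 lo_Ts f])
      fix w assume g: "good n r w"
      show "Trho n r (Ts n (i + 1) (Trhoinv n r (bas w))) = Ts n i (bas w)"
        by (rule conj_bas[OF g r1 nr]) (use i in auto)
    qed
  qed
  have P7: "(Trho n r ^^ r) (Ts n i ((Trhoinv n r ^^ r) f)) = Ts n i f"
    if i: "i \<in> {1..<r}" and f: "Vomega n r f" for i f
  proof -
    have l1: "lo (\<lambda>f. (Trho n r ^^ r) (Ts n i ((Trhoinv n r ^^ r) f)))"
      by (rule lo_comp[OF lo_pow[OF lo_Trho] lo_comp[OF lo_Ts lo_pow[OF lo_Trhoinv]]])
    show ?thesis
    proof (rule lift[OF nr l1 lo_Ts f])
      fix w assume g: "good n r w"
      show "(Trho n r ^^ r) (Ts n i ((Trhoinv n r ^^ r) (bas w))) = Ts n i (bas w)"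
        by (rule powconj_bas[OF g r1 nr]) (use i in auto)
    qed
  qed
  show ?thesis using P1 P2 P3 P4 P5 P6 P7 by blast
qed


end
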